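(* Let $k,d\in\mathbb{N}$ with $0<k<d$, let $\mathcal{H}\in\bar{\mathbb{Q}}\cap[1,\infty)$, let $K$ be the normal closure of $\mathbb{Q}(\mathcal{H}^d)$, and let $\alpha\in A(k,d,\mathcal{H})$. Then $[K(\alpha):K]$ divides $\gcd(k,d)$. Furthermore, if $\alpha_1,\dots,\alpha_d$ are the conjugates of $\alpha$, numbered so that $|\alpha_i|\ge1$ if and only if $1\le i\le d-k$, then every $\sigma\in\mathrm{Gal}(\bar{\mathbb{Q}}/\mathbb{Q})$ with $\sigma(\mathcal{H}^d)=\mathcal{H}^d$ satisfies $\sigma(\{\alpha_1,\dots,\alpha_{d-k}\})=\{\alpha_1,\dots,\alpha_{d-k}\}$.
   Context: $\bar{\mathbb{Q}}$ is the algebraic closure of $\mathbb{Q}$ in $\mathbb{C}$. For algebraic $\alpha$ of degree $d$, with $a_0>0$ the leading coefficient of a minimal polynomial of $\alpha$ in $\mathbb{Z}[t]$ and conjugates $\alpha_1,\dots,\alpha_d$, $H(\alpha)=\big(a_0\prod_i\max\{1,|\alpha_i|\}\big)^{1/d}$ (absolute multiplicative Weil height). $A(k,d,\mathcal{H})=\{\alpha\in\mathbb{C}: [\mathbb{Q}(\alpha):\mathbb{Q}]=d,\ H(\alpha)=\mathcal{H},$ precisely $k$ conjugates of $\alpha$ in the open unit disk$\}$. *)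

theory Defs
  imports "HOL-Computational_Algebra.Computational_Algebra" "HOL-Analysis.Analysis"
begin

definition is_min_int_poly :: "complex \<Rightarrow> int poly \<Rightarrow> bool" where
  "is_min_int_poly x p \<longleftrightarrow> irreducible p \<and> lead_coeff p > 0 \<and> poly (map_poly of_int p) x = 0"

definition min_int_poly :: "complex \<Rightarrow> int poly" where
  "min_int_poly x = (SOME p. is_min_int_poly x p)"

definition alg_degree :: "complex \<Rightarrow> nat" where
  "alg_degree x = degree (min_int_poly x)"

definition conjugates :: "complex \<Rightarrow> complex set" where
  "conjugates x = {z. poly (map_poly of_int (min_int_poly x)) z = 0}"

definition weil_height :: "complex \<Rightarrow> real" where
  "weil_height x = (real_of_int (lead_coeff (min_int_poly x)) *
      (\<Prod>z\<in>conjugates x. max 1 (cmod z))) powr (1 / real (alg_degree x))"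

definition A_set :: "nat \<Rightarrow> nat \<Rightarrow> real \<Rightarrow> complex set" where
  "A_set k d H = {\<alpha>. algebraic \<alpha> \<and> alg_degree \<alpha> = d \<and> weil_height \<alpha> = H \<and>
      card {z \<in> conjugates \<alpha>. cmod z < 1} = k}"

definition is_subfield :: "complex set \<Rightarrow> bool" where
  "is_subfield F \<longleftrightarrow> 0 \<in> F \<and> 1 \<in> F \<and> (\<forall>x\<in>F. \<forall>y\<in>F. x + y \<in> F \<and> x - y \<in> F \<and> x * y \<in> F)
     \<and> (\<forall>x\<in>F. x \<noteq> 0 \<longrightarrow> inverse x \<in> F)"

definition gen_field :: "complex set \<Rightarrow> complex set" where
  "gen_field S = \<Inter>{F. is_subfield F \<and> S \<subseteq> F}"

definition normal_closure :: "complex \<Rightarrow> complex set" where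
  "normal_closure x = gen_field (conjugates x)"

definition degree_over :: "complex set \<Rightarrow> complex \<Rightarrow> nat" where
  "degree_over K a = (LEAST n. \<exists>p :: complex poly. p \<noteq> 0 \<and> degree p = n \<and>
      (\<forall>i. coeff p i \<in> K) \<and> poly p a = 0)"

definition gal_Qbar :: "(complex \<Rightarrow> complex) \<Rightarrow> bool" where
  "gal_Qbar \<sigma> \<longleftrightarrow> bij_betw \<sigma> {x. algebraic x} {x. algebraic x} \<and>
     (\<forall>x y. algebraic x \<longrightarrow> algebraic y \<longrightarrow> \<sigma> (x + y) = \<sigma> x + \<sigma> y \<and> \<sigma> (x * y) = \<sigma> x * \<sigma> y)"

end

theory Submission
  imports Defs
begin

lemma sf_0: "is_subfield F \<Longrightarrow> 0 \<in> F" and sf_1: "is_subfield F \<Longrightarrow> 1 \<in> F"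
  by (auto simp: is_subfield_def)

lemma sf_add: "is_subfield F \<Longrightarrow> x \<in> F \<Longrightarrow> y \<in> F \<Longrightarrow> x + y \<in> F"
  and sf_diff: "is_subfield F \<Longrightarrow> x \<in> F \<Longrightarrow> y \<in> F \<Longrightarrow> x - y \<in> F"
  and sf_mult: "is_subfield F \<Longrightarrow> x \<in> F \<Longrightarrow> y \<in> F \<Longrightarrow> x * y \<in> F"
  by (auto simp: is_subfield_def)

lemma sf_inverse: "is_subfield F \<Longrightarrow> x \<in> F \<Longrightarrow> inverse x \<in> F"
  by (cases "x = 0") (auto simp: is_subfield_def)

lemma sf_uminus: "is_subfield F \<Longrightarrow> x \<in> F \<Longrightarrow> - x \<in> F"
  using sf_diff[of F 0 x] sf_0[of F] by simp

lemma sf_divide: "is_subfield F \<Longrightarrow> x \<in> F \<Longrightarrow> y \<in> F \<Longrightarrow> x / y \<in> F"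
  by (simp add: divide_inverse sf_mult sf_inverse)

lemma sf_sum: "is_subfield F \<Longrightarrow> (\<And>i. i \<in> I \<Longrightarrow> f i \<in> F) \<Longrightarrow> sum f I \<in> F"
  by (induction I rule: infinite_finite_induct) (auto simp: sf_0 sf_add)

lemma sf_prod: "is_subfield F \<Longrightarrow> (\<And>i. i \<in> I \<Longrightarrow> f i \<in> F) \<Longrightarrow> prod f I \<in> F"
  by (induction I rule: infinite_finite_induct) (auto simp: sf_1 sf_mult)

lemma sf_power: "is_subfield F \<Longrightarrow> x \<in> F \<Longrightarrow> x ^ n \<in> F"
  by (induction n) (auto simp: sf_1 sf_mult)

lemma sf_of_nat: "is_subfield F \<Longrightarrow> of_nat n \<in> F"
  by (induction n) (auto simp: sf_0 sf_1 sf_add)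

lemma sf_of_int: "is_subfield F \<Longrightarrow> of_int n \<in> F"
  by (induction n rule: int_induct[where k=0]) (auto simp: sf_add sf_diff sf_0 sf_1)

lemma sf_Ints: "is_subfield F \<Longrightarrow> x \<in> \<int> \<Longrightarrow> x \<in> F"
  by (auto elim!: Ints_cases simp: sf_of_int)

lemma sf_Rats: "is_subfield F \<Longrightarrow> x \<in> \<rat> \<Longrightarrow> x \<in> F"
  by (auto elim!: Rats_cases' simp: sf_of_int sf_divide)

lemma subfield_Rats: "is_subfield (\<rat> :: complex set)"
  unfolding is_subfield_def by auto

lemma subfield_UNIV: "is_subfield (UNIV :: complex set)"
  unfolding is_subfield_def by auto

lemma gen_field_subfield: "is_subfield (gen_field S)"
  unfolding gen_field_def is_subfield_def by auto

lemma gen_field_sup: "S \<subseteq> gen_field S"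
  unfolding gen_field_def by auto

lemma gen_field_least: "is_subfield F \<Longrightarrow> S \<subseteq> F \<Longrightarrow> gen_field S \<subseteq> F"
  unfolding gen_field_def by auto

lemma gen_field_mono: "S \<subseteq> T \<Longrightarrow> gen_field S \<subseteq> gen_field T"
  by (meson gen_field_least gen_field_subfield gen_field_sup order_trans)

section \<open>Polynomials with coefficients in a subfield\<close>

definition Fpoly :: "complex set \<Rightarrow> complex poly \<Rightarrow> bool" where
  "Fpoly F p \<longleftrightarrow> (\<forall>i. coeff p i \<in> F)"

lemma Fpoly_0: "is_subfield F \<Longrightarrow> Fpoly F 0"
  by (simp add: Fpoly_def sf_0)

lemma Fpoly_const: "is_subfield F \<Longrightarrow> c \<in> F \<Longrightarrow> Fpoly F [:c:]"
  by (simp add: Fpoly_def coeff_pCons sf_0 split: nat.split)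

lemma Fpoly_pCons: "is_subfield F \<Longrightarrow> c \<in> F \<Longrightarrow> Fpoly F p \<Longrightarrow> Fpoly F (pCons c p)"
  by (simp add: Fpoly_def coeff_pCons split: nat.split)

lemma Fpoly_pCons_iff: "Fpoly F (pCons c p) \<longleftrightarrow> c \<in> F \<and> Fpoly F p"
  apply (simp add: Fpoly_def coeff_pCons split: nat.split)
  by (metis coeff_pCons_0 coeff_pCons_Suc)

lemma Fpoly_add: "is_subfield F \<Longrightarrow> Fpoly F p \<Longrightarrow> Fpoly F q \<Longrightarrow> Fpoly F (p + q)"
  by (simp add: Fpoly_def sf_add)

lemma Fpoly_diff: "is_subfield F \<Longrightarrow> Fpoly F p \<Longrightarrow> Fpoly F q \<Longrightarrow> Fpoly F (p - q)"
  by (simp add: Fpoly_def sf_diff)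

lemma Fpoly_uminus: "is_subfield F \<Longrightarrow> Fpoly F p \<Longrightarrow> Fpoly F (- p)"
  by (simp add: Fpoly_def sf_uminus)

lemma Fpoly_smult: "is_subfield F \<Longrightarrow> c \<in> F \<Longrightarrow> Fpoly F p \<Longrightarrow> Fpoly F (smult c p)"
  by (simp add: Fpoly_def sf_mult)

lemma Fpoly_monom: "is_subfield F \<Longrightarrow> c \<in> F \<Longrightarrow> Fpoly F (monom c n)"
  by (simp add: Fpoly_def coeff_monom sf_0)

lemma Fpoly_mult: "is_subfield F \<Longrightarrow> Fpoly F p \<Longrightarrow> Fpoly F q \<Longrightarrow> Fpoly F (p * q)"
  unfolding Fpoly_def coeff_mult by (auto intro!: sf_sum sf_mult)

lemma Fpoly_power: "is_subfield F \<Longrightarrow> Fpoly F p \<Longrightarrow> Fpoly F (p ^ n)"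
  by (induction n) (auto simp: Fpoly_mult one_pCons Fpoly_const sf_1)

lemma Fpoly_prod: "is_subfield F \<Longrightarrow> (\<And>i. i \<in> I \<Longrightarrow> Fpoly F (f i)) \<Longrightarrow> Fpoly F (prod f I)"
  by (induction I rule: infinite_finite_induct) (auto simp: Fpoly_mult one_pCons Fpoly_const sf_1)

lemma Fpoly_pderiv: "is_subfield F \<Longrightarrow> Fpoly F p \<Longrightarrow> Fpoly F (pderiv p)"
  unfolding Fpoly_def coeff_pderiv
  by (metis of_nat_Suc sf_mult sf_of_nat)

lemma Fpoly_poly: "is_subfield F \<Longrightarrow> Fpoly F p \<Longrightarrow> x \<in> F \<Longrightarrow> poly p x \<in> F"
  unfolding poly_altdef Fpoly_def by (auto intro!: sf_sum sf_mult sf_power)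

lemma Fpoly_mono: "F \<subseteq> G \<Longrightarrow> Fpoly F p \<Longrightarrow> Fpoly G p"
  by (auto simp: Fpoly_def)

lemma Fpoly_of_int: "is_subfield F \<Longrightarrow> Fpoly F (map_poly of_int p)"
  by (simp add: Fpoly_def coeff_map_poly sf_of_int)

lemma Fpoly_division:
  assumes F: "is_subfield F" and p: "Fpoly F p" and q: "Fpoly F q" and q0: "q \<noteq> 0"
  shows "\<exists>s r. Fpoly F s \<and> Fpoly F r \<and> p = s * q + r \<and> (r = 0 \<or> degree r < degree q)"
  using p
proof (induction "degree p" arbitrary: p rule: less_induct)
  case (less p)
  show ?case
  proof (cases "p = 0 \<or> degree p < degree q")
    case True
    then show ?thesis
      using less.prems F by (intro exI[of _ 0] exI[of _ p]) (auto simp: Fpoly_0)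
  next
    case False
    hence p0: "p \<noteq> 0" and dq: "degree q \<le> degree p" by auto
    define c where "c = lead_coeff p / lead_coeff q"
    define t where "t = monom c (degree p - degree q)"
    define p' where "p' = p - t * q"
    have cF: "c \<in> F" unfolding c_def using less.prems q F
      by (auto simp: Fpoly_def intro!: sf_divide)
    have tF: "Fpoly F t" unfolding t_def using F cF by (rule Fpoly_monom)
    have p'F: "Fpoly F p'" unfolding p'_def using F less.prems tF q
      by (intro Fpoly_diff Fpoly_mult)
    have lq: "lead_coeff q \<noteq> 0" using q0 by simp
    have c0: "c \<noteq> 0" using lq p0 by (simp add: c_def)
    have dt: "degree t = degree p - degree q" using c0 by (simp add: t_def degree_monom_eq)
    have t0: "t \<noteq> 0" using c0 by (simp add: t_def)
    have dtq: "degree (t * q) = degree p"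
      using t0 q0 dq dt by (simp add: degree_mult_eq)
    have ltq: "lead_coeff (t * q) = lead_coeff p"
    proof -
      have "lead_coeff t = c" using dt by (simp add: t_def)
      then show ?thesis using lq by (simp add: lead_coeff_mult c_def)
    qed
    show ?thesis
    proof (cases "p' = 0")
      case True
      hence "p = t * q + 0" unfolding p'_def by simp
      then show ?thesis using tF F by (intro exI[of _ t] exI[of _ 0]) (auto simp: Fpoly_0)
    next
      case False
      have "degree p' \<le> degree p" unfolding p'_def using dtq by (metis degree_diff_le le_refl)
      moreover have "coeff p' (degree p) = 0" unfolding p'_def using dtq ltq by simp
      ultimately have dlt: "degree p' < degree p" using False
        by (metis leading_coeff_0_iff le_neq_implies_less)
      from less.hyps[OF dlt p'F] obtain s r where
        sr: "Fpoly F s" "Fpoly F r" "p' = s * q + r" "r = 0 \<or> degree r < degree q" by blast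
      have "p = (s + t) * q + r" using sr(3) unfolding p'_def by (simp add: algebra_simps)
      then show ?thesis using sr tF F by (intro exI[of _ "s + t"] exI[of _ r]) (auto intro: Fpoly_add)
    qed
  qed
qed


section \<open>Homomorphisms on subfields\<close>

definition hom_on :: "complex set \<Rightarrow> (complex \<Rightarrow> complex) \<Rightarrow> bool" where
  "hom_on E \<tau> \<longleftrightarrow> \<tau> 1 = 1 \<and> (\<forall>x\<in>E. \<forall>y\<in>E. \<tau> (x + y) = \<tau> x + \<tau> y \<and> \<tau> (x * y) = \<tau> x * \<tau> y)"

lemma hom_on_subset: "hom_on E \<tau> \<Longrightarrow> E' \<subseteq> E \<Longrightarrow> hom_on E' \<tau>"
  by (auto simp: hom_on_def)

lemma hom_on_cong: "hom_on E \<tau> \<Longrightarrow> 1 \<in> E \<Longrightarrow> (\<And>x. x \<in> E \<Longrightarrow> \<tau>' x = \<tau> x) \<Longrightarrow> is_subfield E \<Longrightarrow> hom_on E \<tau>'"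
  unfolding hom_on_def by (auto simp: sf_add sf_mult)

context
  fixes E :: "complex set" and \<tau> :: "complex \<Rightarrow> complex"
  assumes E: "is_subfield E" and h: "hom_on E \<tau>"
begin

lemma hom_1: "\<tau> 1 = 1" using h by (simp add: hom_on_def)

lemma hom_add: "x \<in> E \<Longrightarrow> y \<in> E \<Longrightarrow> \<tau> (x + y) = \<tau> x + \<tau> y"
  and hom_mult: "x \<in> E \<Longrightarrow> y \<in> E \<Longrightarrow> \<tau> (x * y) = \<tau> x * \<tau> y"
  using h by (auto simp: hom_on_def)

lemma hom_0: "\<tau> 0 = 0"
  using hom_add[of 0 0] sf_0[OF E] by simp

lemma hom_uminus: "x \<in> E \<Longrightarrow> \<tau> (- x) = - \<tau> x"
proof -
  assume x: "x \<in> E"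
  have "\<tau> x + \<tau> (- x) = 0" using hom_add[OF x sf_uminus[OF E x]] hom_0 by simp
  then show ?thesis by (metis add.commute eq_neg_iff_add_eq_0)
qed

lemma hom_diff: "x \<in> E \<Longrightarrow> y \<in> E \<Longrightarrow> \<tau> (x - y) = \<tau> x - \<tau> y"
  using hom_add[of x "-y"] hom_uminus[of y] sf_uminus[OF E] by simp

lemma hom_inverse: "x \<in> E \<Longrightarrow> \<tau> (inverse x) = inverse (\<tau> x)"
proof (cases "x = 0")
  case True then show ?thesis by (simp add: hom_0)
next
  case False
  assume x: "x \<in> E"
  have "\<tau> x * \<tau> (inverse x) = 1"
    using hom_mult[OF x sf_inverse[OF E x]] False hom_1 by simp
  then show ?thesis by (metis inverse_unique)
qed

lemma hom_divide: "x \<in> E \<Longrightarrow> y \<in> E \<Longrightarrow> \<tau> (x / y) = \<tau> x / \<tau> y"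
  by (simp add: divide_inverse hom_mult hom_inverse sf_inverse[OF E])

lemma hom_eq_0_iff: "x \<in> E \<Longrightarrow> \<tau> x = 0 \<longleftrightarrow> x = 0"
proof
  assume x: "x \<in> E" and "\<tau> x = 0"
  show "x = 0"
  proof (rule ccontr)
    assume "x \<noteq> 0"
    then have "\<tau> (x * inverse x) = 1" using hom_1 by simp
    then show False using hom_mult[OF x sf_inverse[OF E x]] \<open>\<tau> x = 0\<close> by simp
  qed
qed (simp add: hom_0)

lemma hom_inj: "inj_on \<tau> E"
proof (rule inj_onI)
  fix x y assume "x \<in> E" "y \<in> E" "\<tau> x = \<tau> y"
  then have "\<tau> (x - y) = 0" by (simp add: hom_diff)
  then show "x = y" using hom_eq_0_iff[of "x - y"] sf_diff[OF E] \<open>x \<in> E\<close> \<open>y \<in> E\<close> by simp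
qed

lemma hom_of_nat: "\<tau> (of_nat n) = of_nat n"
  by (induction n) (simp_all add: hom_0 hom_1 hom_add sf_of_nat[OF E] sf_1[OF E])

lemma hom_of_int: "\<tau> (of_int n) = of_int n"
  by (induction n rule: int_induct[where k=0])
    (simp_all add: hom_0 hom_add hom_diff hom_1 sf_of_int[OF E] sf_1[OF E])

lemma hom_Rats: "x \<in> \<rat> \<Longrightarrow> \<tau> x = x"
  by (auto elim!: Rats_cases' simp: hom_divide hom_of_int sf_of_int[OF E])

lemma hom_sum: "(\<And>i. i \<in> I \<Longrightarrow> f i \<in> E) \<Longrightarrow> \<tau> (sum f I) = (\<Sum>i\<in>I. \<tau> (f i))"
  by (induction I rule: infinite_finite_induct) (auto simp: hom_0 hom_add sf_sum[OF E])

lemma hom_prod: "(\<And>i. i \<in> I \<Longrightarrow> f i \<in> E) \<Longrightarrow> \<tau> (prod f I) = (\<Prod>i\<in>I. \<tau> (f i))"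
  by (induction I rule: infinite_finite_induct) (auto simp: hom_1 hom_mult sf_prod[OF E])

lemma hom_power: "x \<in> E \<Longrightarrow> \<tau> (x ^ n) = \<tau> x ^ n"
  by (induction n) (auto simp: hom_1 hom_mult sf_power[OF E])

lemma coeff_map_hom: "coeff (map_poly \<tau> p) i = \<tau> (coeff p i)"
  by (simp add: coeff_map_poly hom_0)

lemma degree_map_hom: "Fpoly E p \<Longrightarrow> degree (map_poly \<tau> p) = degree p"
proof (cases "p = 0")
  case False
  assume p: "Fpoly E p"
  have "coeff (map_poly \<tau> p) (degree p) \<noteq> 0"
    using False p by (simp add: coeff_map_hom hom_eq_0_iff Fpoly_def)
  then have "degree p \<le> degree (map_poly \<tau> p)" by (rule le_degree)
  moreover have "degree (map_poly \<tau> p) \<le> degree p" by (rule degree_le) (simp add: coeff_map_hom hom_0 coeff_eq_0)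
  ultimately show ?thesis by simp
qed simp

lemma hom_poly: "Fpoly E q \<Longrightarrow> z \<in> E \<Longrightarrow> \<tau> (poly q z) = poly (map_poly \<tau> q) (\<tau> z)"
  using degree_map_hom[of q] unfolding poly_altdef Fpoly_def
  by (subst hom_sum) (auto simp: hom_mult hom_power sf_mult[OF E] sf_power[OF E] coeff_map_hom
      degree_map_hom intro!: sum.cong)

lemma map_hom_add: "Fpoly E p \<Longrightarrow> Fpoly E q \<Longrightarrow> map_poly \<tau> (p + q) = map_poly \<tau> p + map_poly \<tau> q"
  by (rule poly_eqI) (simp add: coeff_map_hom Fpoly_def hom_add)

lemma map_hom_diff: "Fpoly E p \<Longrightarrow> Fpoly E q \<Longrightarrow> map_poly \<tau> (p - q) = map_poly \<tau> p - map_poly \<tau> q"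
  by (rule poly_eqI) (simp add: coeff_map_hom Fpoly_def hom_diff)

lemma map_hom_mult: "Fpoly E p \<Longrightarrow> Fpoly E q \<Longrightarrow> map_poly \<tau> (p * q) = map_poly \<tau> p * map_poly \<tau> q"
  by (rule poly_eqI) (auto simp: coeff_map_hom Fpoly_def coeff_mult hom_sum hom_mult sf_mult[OF E]
      intro!: sum.cong)

lemma map_hom_const: "map_poly \<tau> [:c:] = [:\<tau> c:]"
  by (rule poly_eqI) (simp add: coeff_map_hom coeff_pCons hom_0 split: nat.split)

lemma map_hom_1: "map_poly \<tau> 1 = 1"
  using map_hom_const[of 1] by (simp add: hom_1 one_pCons)

lemma map_hom_prod: "(\<And>i. i \<in> I \<Longrightarrow> Fpoly E (f i)) \<Longrightarrow> map_poly \<tau> (prod f I) = (\<Prod>i\<in>I. map_poly \<tau> (f i))"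
proof (induction I rule: infinite_finite_induct)
  case (insert x F)
  then show ?case by (simp add: map_hom_mult Fpoly_prod[OF E])
qed (auto simp: map_hom_1)

end

lemma hom_on_id: "hom_on E id" by (simp add: hom_on_def)

section \<open>Degree over a subfield and minimal polynomials\<close>

definition alg_over :: "complex set \<Rightarrow> complex \<Rightarrow> bool" where
  "alg_over F z \<longleftrightarrow> (\<exists>p. p \<noteq> 0 \<and> Fpoly F p \<and> poly p z = 0)"

lemma algebraic_alg_over: "algebraic z \<Longrightarrow> is_subfield F \<Longrightarrow> alg_over F z"
proof -
  assume "algebraic z" "is_subfield F"
  then obtain p where p: "p \<noteq> 0" "poly (map_poly of_int p) z = 0" by (elim algebraicE')
  have "map_poly (of_int :: int \<Rightarrow> complex) p \<noteq> 0" using p(1) by (subst map_poly_eq_0_iff) auto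
  then show ?thesis unfolding alg_over_def using p(2) Fpoly_of_int[OF \<open>is_subfield F\<close>] by blast
qed

lemma alg_over_algebraic: "alg_over \<rat> z \<Longrightarrow> algebraic z"
  unfolding alg_over_def Fpoly_def by (auto intro: algebraicI')

lemma degree_over_le:
  "p \<noteq> 0 \<Longrightarrow> Fpoly F p \<Longrightarrow> poly p z = 0 \<Longrightarrow> degree_over F z \<le> degree p"
  unfolding degree_over_def Fpoly_def by (rule Least_le) auto

definition minpoly :: "complex set \<Rightarrow> complex \<Rightarrow> complex poly" where
  "minpoly F z = (SOME q. lead_coeff q = 1 \<and> Fpoly F q \<and> poly q z = 0 \<and> degree q = degree_over F z)"

lemma minpoly_ex:
  assumes F: "is_subfield F" and a: "alg_over F z"
  shows "\<exists>q. lead_coeff q = 1 \<and> Fpoly F q \<and> poly q z = 0 \<and> degree q = degree_over F z"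
proof -
  have "\<exists>n p. p \<noteq> 0 \<and> degree p = n \<and> (\<forall>i. coeff p i \<in> F) \<and> poly p z = 0"
    using a unfolding alg_over_def Fpoly_def by blast
  then have "\<exists>p. p \<noteq> 0 \<and> degree p = degree_over F z \<and> (\<forall>i. coeff p i \<in> F) \<and> poly p z = 0"
    unfolding degree_over_def by (rule LeastI_ex)
  then obtain p where p: "p \<noteq> 0" "degree p = degree_over F z" "Fpoly F p" "poly p z = 0"
    unfolding Fpoly_def by blast
  define q where "q = smult (inverse (lead_coeff p)) p"
  have "lead_coeff p \<in> F" using p(3) by (simp add: Fpoly_def)
  then have "Fpoly F q" unfolding q_def using F p(3) by (intro Fpoly_smult sf_inverse)
  moreover have "lead_coeff p \<noteq> 0" using p(1) by simp
  then have "lead_coeff q = 1" "degree q = degree p" "poly q z = 0"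
    using p(4) by (simp_all add: q_def)
  ultimately show ?thesis using p by (intro exI[of _ q]) auto
qed

context
  fixes F :: "complex set" and z :: complex
  assumes F: "is_subfield F" and a: "alg_over F z"
begin

lemma minpoly_props:
  "lead_coeff (minpoly F z) = 1" "Fpoly F (minpoly F z)" "poly (minpoly F z) z = 0"
  "degree (minpoly F z) = degree_over F z"
  using someI_ex[OF minpoly_ex[OF F a]] unfolding minpoly_def by blast+

lemma minpoly_nz: "minpoly F z \<noteq> 0"
  using minpoly_props(1) by auto

lemma degree_over_pos: "degree_over F z \<ge> 1"
proof (rule ccontr)
  assume "\<not> ?thesis"
  then have "degree (minpoly F z) = 0" using minpoly_props(4) by simp
  then have "[:coeff (minpoly F z) 0:] = minpoly F z" by (rule degree_0_id)
  moreover have "coeff (minpoly F z) 0 = 1" using minpoly_props(1) \<open>degree (minpoly F z) = 0\<close> by simp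
  ultimately have "minpoly F z = [:1:]" by simp
  then have "poly (minpoly F z) z = 1" by simp
  then show False using minpoly_props(3) by simp
qed

lemma minpoly_dvd:
  assumes p: "Fpoly F p" "poly p z = 0"
  shows "\<exists>s. Fpoly F s \<and> p = s * minpoly F z"
proof -
  obtain s r where sr: "Fpoly F s" "Fpoly F r" "p = s * minpoly F z + r"
    "r = 0 \<or> degree r < degree (minpoly F z)"
    using Fpoly_division[OF F p(1) minpoly_props(2) minpoly_nz] by blast
  have "poly r z = 0" using sr(3) p(2) minpoly_props(3) by (simp add: eq_neg_iff_add_eq_0)
  have "r = 0"
  proof (rule ccontr)
    assume "r \<noteq> 0"
    from degree_over_le[OF this sr(2) \<open>poly r z = 0\<close>] sr(4) \<open>r \<noteq> 0\<close> minpoly_props(4)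
    show False by simp
  qed
  then show ?thesis using sr by auto
qed

lemma minpoly_unique:
  assumes q: "lead_coeff q = 1" "Fpoly F q" "poly q z = 0" "degree q = degree_over F z"
  shows "q = minpoly F z"
proof -
  obtain s where s: "Fpoly F s" "q = s * minpoly F z" using minpoly_dvd q(2,3) by blast
  have q0: "q \<noteq> 0" using q(1) by auto
  then have s0: "s \<noteq> 0" using s by auto
  have "degree q = degree s + degree (minpoly F z)" using s(2) s0 minpoly_nz by (simp add: degree_mult_eq)
  then have "degree s = 0" using q(4) minpoly_props(4) by simp
  moreover have "lead_coeff q = lead_coeff s * lead_coeff (minpoly F z)" using s(2) by (simp add: lead_coeff_mult)
  moreover note degree_0_id[OF \<open>degree s = 0\<close>]
  ultimately have "s = [:1:]" using q(1) minpoly_props(1) by simp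
  then have "s = 1" by (simp add: one_pCons)
  then show ?thesis using s by simp
qed

lemma minpoly_simple: "poly (pderiv (minpoly F z)) z \<noteq> 0"
proof
  assume r: "poly (pderiv (minpoly F z)) z = 0"
  have d: "degree (minpoly F z) \<ge> 1" using degree_over_pos minpoly_props(4) by simp
  then have "pderiv (minpoly F z) \<noteq> 0" by (simp add: pderiv_eq_0_iff)
  from degree_over_le[OF this Fpoly_pderiv[OF F minpoly_props(2)] r]
  show False using d minpoly_props(4) by (simp add: degree_pderiv)
qed

end

lemma minpoly_shared:
  assumes F: "is_subfield F" and a: "alg_over F x" and y: "poly (minpoly F x) y = 0"
  shows "minpoly F y = minpoly F x"
proof -
  have ay: "alg_over F y" unfolding alg_over_def
    using minpoly_nz[OF F a] minpoly_props(2)[OF F a] y by blast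
  obtain s where s: "Fpoly F s" "minpoly F x = s * minpoly F y"
    using minpoly_dvd[OF F ay minpoly_props(2)[OF F a] y] by blast
  have s0: "s \<noteq> 0" using s(2) minpoly_nz[OF F a] by auto
  have deq: "degree (minpoly F x) = degree s + degree (minpoly F y)"
    using s(2) s0 minpoly_nz[OF F ay] by (simp add: degree_mult_eq)
  have "poly s x = 0 \<or> poly (minpoly F y) x = 0"
    using minpoly_props(3)[OF F a] s(2) by simp
  then show ?thesis
  proof
    assume "poly s x = 0"
    from degree_over_le[OF s0 s(1) this] show ?thesis
      using deq minpoly_props(4)[OF F a] degree_over_pos[OF F ay] minpoly_props(4)[OF F ay] by simp
  next
    assume r: "poly (minpoly F y) x = 0"
    from degree_over_le[OF minpoly_nz[OF F ay] minpoly_props(2)[OF F ay] r]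
    have "degree (minpoly F y) = degree_over F x" using deq minpoly_props(4)[OF F a] by simp
    from minpoly_unique[OF F a minpoly_props(1,2)[OF F ay] r this] show ?thesis .
  qed
qed

lemma minpoly_rsquarefree:
  assumes F: "is_subfield F" and a: "alg_over F x"
  shows "rsquarefree (minpoly F x)"
  unfolding rsquarefree_roots
proof (intro allI notI)
  fix y assume "poly (minpoly F x) y = 0 \<and> poly (pderiv (minpoly F x)) y = 0"
  then have y: "poly (minpoly F x) y = 0" "poly (pderiv (minpoly F x)) y = 0" by auto
  have ay: "alg_over F y" unfolding alg_over_def
    using minpoly_nz[OF F a] minpoly_props(2)[OF F a] y by blast
  show False using minpoly_simple[OF F ay] minpoly_shared[OF F a y(1)] y(2) by simp
qed


section \<open>Simple extensions\<close>

definition adjV :: "complex set \<Rightarrow> complex \<Rightarrow> complex set" where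
  "adjV E a = {poly q a | q. Fpoly E q}"

context
  fixes E :: "complex set" and a :: complex
  assumes E: "is_subfield E" and alg: "alg_over E a"
begin

lemma adj_inverse:
  assumes "Fpoly E q" "poly q a \<noteq> 0"
  shows "\<exists>q'. Fpoly E q' \<and> poly q' a = inverse (poly q a)"
  using assms
proof (induction "degree q" arbitrary: q rule: less_induct)
  case (less q)
  define m where "m = minpoly E a"
  have m: "lead_coeff m = 1" "Fpoly E m" "poly m a = 0" "degree m = degree_over E a" "m \<noteq> 0"
    using minpoly_props[OF E alg] minpoly_nz[OF E alg] unfolding m_def by auto
  consider "degree q = 0" | "degree q \<ge> degree m" | "0 < degree q" "degree q < degree m" by linarith
  then show ?case
  proof cases
    case 1
    define c where "c = coeff q 0"
    have q: "q = [:c:]" unfolding c_def using 1 by (metis degree_0_id)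
    have cE: "c \<in> E" using less.prems(1) by (simp add: Fpoly_def c_def)
    have "poly q a = c" using q by simp
    then show ?thesis using cE E by (intro exI[of _ "[:inverse c:]"]) (auto intro: Fpoly_const sf_inverse)
  next
    case 2
    obtain s r where sr: "Fpoly E s" "Fpoly E r" "q = s * m + r" "r = 0 \<or> degree r < degree m"
      using Fpoly_division[OF E less.prems(1) m(2) m(5)] by blast
    have ra: "poly r a = poly q a" using sr(3) m(3) by simp
    then have "r \<noteq> 0" using less.prems(2) by auto
    then have "degree r < degree q" using sr(4) 2 by simp
    from less.hyps[OF this sr(2)] ra less.prems(2) show ?thesis by simp
  next
    case 3
    have q0: "q \<noteq> 0" using 3 by auto
    obtain s r where sr: "Fpoly E s" "Fpoly E r" "m = s * q + r" "r = 0 \<or> degree r < degree q"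
      using Fpoly_division[OF E m(2) less.prems(1) q0] by blast
    have rel: "poly s a * poly q a + poly r a = 0" using sr(3) m(3) by (metis poly_add poly_mult)
    show ?thesis
    proof (cases "poly r a = 0")
      case False
      then have "r \<noteq> 0" by auto
      then have dr: "degree r < degree q" using sr(4) by simp
      from less.hyps[OF dr sr(2) False] obtain r' where r': "Fpoly E r'" "poly r' a = inverse (poly r a)"
        by blast
      have rr: "poly r a = - (poly s a * poly q a)" using rel by (simp add: eq_neg_iff_add_eq_0 add.commute)
      then have sa: "poly s a \<noteq> 0" using False by auto
      have "poly (- (s * r')) a = - poly s a * inverse (- (poly s a * poly q a))"
        using r'(2) rr by simp
      also have "\<dots> = inverse (poly q a)" using sa less.prems(2) by (simp add: field_simps)
      finally have "poly (- (s * r')) a = inverse (poly q a)" .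
      moreover have "Fpoly E (- (s * r'))" using E sr(1) r'(1) by (intro Fpoly_uminus Fpoly_mult)
      ultimately show ?thesis by blast
    next
      case True
      have "r = 0"
      proof (rule ccontr)
        assume "r \<noteq> 0"
        from degree_over_le[OF this sr(2) True] sr(4) 3 m(4) \<open>r \<noteq> 0\<close> show False by simp
      qed
      then have ms: "m = s * q" using sr(3) by simp
      then have s0: "s \<noteq> 0" using m(5) by auto
      have "poly s a = 0" using rel True less.prems(2) by simp
      from degree_over_le[OF s0 sr(1) this] have "degree_over E a \<le> degree s" .
      moreover have "degree m = degree s + degree q" using ms s0 q0 by (simp add: degree_mult_eq)
      ultimately show ?thesis using m(4) 3 by simp
    qed
  qed
qed

lemma adjV_subfield: "is_subfield (adjV E a)"
  unfolding is_subfield_def adjV_def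
proof (intro conjI ballI impI)
  show "0 \<in> {poly q a |q. Fpoly E q}" using Fpoly_0[OF E] by (intro CollectI exI[of _ 0]) simp
  show "1 \<in> {poly q a |q. Fpoly E q}" using Fpoly_const[OF E sf_1[OF E]]
    by (intro CollectI exI[of _ "[:1:]"]) simp
next
  fix x y assume "x \<in> {poly q a |q. Fpoly E q}" "y \<in> {poly q a |q. Fpoly E q}"
  then obtain p q where pq: "Fpoly E p" "Fpoly E q" "x = poly p a" "y = poly q a" by blast
  show "x + y \<in> {poly q a |q. Fpoly E q}" using pq Fpoly_add[OF E pq(1,2)]
    by (intro CollectI exI[of _ "p + q"]) simp
  show "x - y \<in> {poly q a |q. Fpoly E q}" using pq Fpoly_diff[OF E pq(1,2)]
    by (intro CollectI exI[of _ "p - q"]) simp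
  show "x * y \<in> {poly q a |q. Fpoly E q}" using pq Fpoly_mult[OF E pq(1,2)]
    by (intro CollectI exI[of _ "p * q"]) simp
next
  fix x assume "x \<in> {poly q a |q. Fpoly E q}" "x \<noteq> 0"
  then obtain p where p: "Fpoly E p" "x = poly p a" by blast
  with adj_inverse[of p] \<open>x \<noteq> 0\<close> obtain q' where "Fpoly E q'" "poly q' a = inverse x" by auto
  then show "inverse x \<in> {poly q a |q. Fpoly E q}" by (intro CollectI exI[of _ q']) auto
qed

lemma adjV_contains: "E \<subseteq> adjV E a" "a \<in> adjV E a"
proof -
  show "E \<subseteq> adjV E a" unfolding adjV_def
    by (auto intro!: exI[of _ "[:x:]" for x] Fpoly_const[OF E])
  show "a \<in> adjV E a" unfolding adjV_def
    using Fpoly_pCons[OF E sf_0[OF E] Fpoly_const[OF E sf_1[OF E]]]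
    by (intro CollectI exI[of _ "[:0, 1:]"]) simp
qed

lemma adjV_least: "is_subfield G \<Longrightarrow> E \<subseteq> G \<Longrightarrow> a \<in> G \<Longrightarrow> adjV E a \<subseteq> G"
  unfolding adjV_def using Fpoly_poly Fpoly_mono by blast

lemma gen_field_adj: "gen_field (insert a E) = adjV E a"
  by (meson adjV_contains adjV_least adjV_subfield gen_field_least gen_field_subfield gen_field_sup
      insert_subset subset_antisym)

lemma adj_wd:
  assumes h: "hom_on E \<tau>" and b: "poly (map_poly \<tau> (minpoly E a)) b = 0"
    and q: "Fpoly E q1" "Fpoly E q2" "poly q1 a = poly q2 a"
  shows "poly (map_poly \<tau> q1) b = poly (map_poly \<tau> q2) b"
proof -
  have r: "Fpoly E (q1 - q2)" "poly (q1 - q2) a = 0" using q Fpoly_diff[OF E] by auto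
  obtain s where s: "Fpoly E s" "q1 - q2 = s * minpoly E a" using minpoly_dvd[OF E alg r] by blast
  have "map_poly \<tau> q1 - map_poly \<tau> q2 = map_poly \<tau> s * map_poly \<tau> (minpoly E a)"
    using map_hom_diff[OF E h q(1,2)] map_hom_mult[OF E h s(1) minpoly_props(2)[OF E alg]] s(2) by simp
  then have "poly (map_poly \<tau> q1 - map_poly \<tau> q2) b = 0" using b by simp
  then show ?thesis by simp
qed

lemma ext1:
  assumes h: "hom_on E \<tau>" and b: "poly (map_poly \<tau> (minpoly E a)) b = 0"
  shows "\<exists>\<tau>'. hom_on (adjV E a) \<tau>' \<and> (\<forall>x\<in>E. \<tau>' x = \<tau> x) \<and> \<tau>' a = b"
proof -
  define rep where "rep x = (SOME q. Fpoly E q \<and> poly q a = x)" for x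
  define \<tau>' where "\<tau>' x = poly (map_poly \<tau> (rep x)) b" for x
  have rep: "Fpoly E (rep x) \<and> poly (rep x) a = x" if "x \<in> adjV E a" for x
  proof -
    from that obtain q where "Fpoly E q" "poly q a = x" unfolding adjV_def by blast
    then show ?thesis unfolding rep_def by (rule someI[where x = q, OF conjI])
  qed
  have key: "\<tau>' x = poly (map_poly \<tau> q) b" if "Fpoly E q" "poly q a = x" for q x
  proof -
    have "x \<in> adjV E a" using that unfolding adjV_def by blast
    from rep[OF this] show ?thesis unfolding \<tau>'_def using adj_wd[OF h b] that by blast
  qed
  have h0: "\<tau> 0 = 0" using hom_0[OF E h] .
  have "hom_on (adjV E a) \<tau>'"
    unfolding hom_on_def
  proof (intro conjI ballI)
    show "\<tau>' 1 = 1" using key[OF Fpoly_const[OF E sf_1[OF E]]] by (simp add: map_hom_const[OF E h] hom_1[OF E h])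
  next
    fix x y assume xy: "x \<in> adjV E a" "y \<in> adjV E a"
    note rx = rep[OF xy(1)] and ry = rep[OF xy(2)]
    show "\<tau>' (x + y) = \<tau>' x + \<tau>' y"
      using key[OF Fpoly_add[OF E rx[THEN conjunct1] ry[THEN conjunct1]]] key[of "rep x" x] key[of "rep y" y]
        rx ry map_hom_add[OF E h rx[THEN conjunct1] ry[THEN conjunct1]] by simp
    show "\<tau>' (x * y) = \<tau>' x * \<tau>' y"
      using key[OF Fpoly_mult[OF E rx[THEN conjunct1] ry[THEN conjunct1]]] key[of "rep x" x] key[of "rep y" y]
        rx ry map_hom_mult[OF E h rx[THEN conjunct1] ry[THEN conjunct1]] by simp
  qed
  moreover have "\<tau>' x = \<tau> x" if "x \<in> E" for x
    using key[OF Fpoly_const[OF E that]] by (simp add: map_hom_const[OF E h])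
  moreover have "\<tau>' a = b"
  proof -
    have f: "Fpoly E [:0, 1:]" using Fpoly_pCons[OF E sf_0[OF E] Fpoly_const[OF E sf_1[OF E]]] .
    have "map_poly \<tau> [:0, 1:] = [:0, 1:]"
      by (rule poly_eqI) (simp add: coeff_map_hom[OF E h] coeff_pCons h0 hom_1[OF E h] split: nat.split)
    then show ?thesis using key[OF f] by simp
  qed
  ultimately show ?thesis by blast
qed

end

lemma ext1':
  assumes E: "is_subfield E" and a: "algebraic a" and h: "hom_on E \<tau>"
    and b: "poly (map_poly \<tau> (minpoly E a)) b = 0"
  shows "\<exists>\<tau>'. hom_on (gen_field (insert a E)) \<tau>' \<and> (\<forall>x\<in>E. \<tau>' x = \<tau> x) \<and> \<tau>' a = b"
  using ext1[OF E algebraic_alg_over[OF a E] h b] gen_field_adj[OF E algebraic_alg_over[OF a E]] by simp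

lemma ext_root_exists:
  assumes E: "is_subfield E" and a: "algebraic a" and h: "hom_on E \<tau>"
  shows "\<exists>b. poly (map_poly \<tau> (minpoly E a)) b = 0"
proof -
  have al: "alg_over E a" using algebraic_alg_over[OF a E] .
  have "degree (map_poly \<tau> (minpoly E a)) = degree_over E a"
    using degree_map_hom[OF E h minpoly_props(2)[OF E al]] minpoly_props(4)[OF E al] by simp
  then have "degree (map_poly \<tau> (minpoly E a)) \<noteq> 0" using degree_over_pos[OF E al] by simp
  then have "\<not> constant (poly (map_poly \<tau> (minpoly E a)))"
    by (metis constant_degree)
  then show ?thesis using fundamental_theorem_of_algebra by blast
qed

lemma ext_set:
  assumes "finite S"
  shows "is_subfield E \<Longrightarrow> hom_on E \<tau> \<Longrightarrow> (\<forall>x\<in>S. algebraic x) \<Longrightarrow>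
     \<exists>\<tau>'. hom_on (gen_field (E \<union> S)) \<tau>' \<and> (\<forall>x\<in>E. \<tau>' x = \<tau> x)"
  using assms
proof (induction S arbitrary: rule: finite_induct)
  case empty
  have "gen_field E = E"
    using empty.prems(1) gen_field_least gen_field_sup by blast
  then show ?case using empty.prems by (intro exI[of _ \<tau>]) simp
next
  case (insert a S)
  then obtain \<tau>1 where t1: "hom_on (gen_field (E \<union> S)) \<tau>1" "\<forall>x\<in>E. \<tau>1 x = \<tau> x" by auto
  let ?G = "gen_field (E \<union> S)"
  have G: "is_subfield ?G" by (rule gen_field_subfield)
  have aa: "algebraic a" using insert.prems by simp
  obtain b where b: "poly (map_poly \<tau>1 (minpoly ?G a)) b = 0" using ext_root_exists[OF G aa t1(1)] by blast
  obtain \<tau>2 where t2: "hom_on (gen_field (insert a ?G)) \<tau>2" "\<forall>x\<in>?G. \<tau>2 x = \<tau>1 x"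
    using ext1'[OF G aa t1(1) b] by blast
  have eq: "gen_field (insert a ?G) = gen_field (E \<union> insert a S)"
  proof (rule subset_antisym)
    show "gen_field (insert a ?G) \<subseteq> gen_field (E \<union> insert a S)"
      by (intro gen_field_least gen_field_subfield)
         (use gen_field_sup[of "E \<union> insert a S"] gen_field_mono[of "E \<union> S" "E \<union> insert a S"] in auto)
    show "gen_field (E \<union> insert a S) \<subseteq> gen_field (insert a ?G)"
      by (intro gen_field_least gen_field_subfield)
         (use gen_field_sup[of "insert a ?G"] gen_field_sup[of "E \<union> S"] in auto)
  qed
  have "\<forall>x\<in>E. \<tau>2 x = \<tau> x" using t2(2) t1(2) gen_field_sup[of "E \<union> S"] by auto
  then show ?case using t2(1) eq by auto
qed


section \<open>Linear dependence and closure of algebraic numbers\<close>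

definition in_span :: "complex set \<Rightarrow> complex set \<Rightarrow> complex \<Rightarrow> bool" where
  "in_span F W z \<longleftrightarrow> (\<exists>c. (\<forall>w\<in>W. c w \<in> F) \<and> z = (\<Sum>w\<in>W. c w * w))"

context
  fixes F :: "complex set" assumes F: "is_subfield F"
begin

lemma span_0: "in_span F W 0"
  unfolding in_span_def using sf_0[OF F] by (intro exI[of _ "\<lambda>_. 0"]) simp

lemma span_add: "in_span F W x \<Longrightarrow> in_span F W y \<Longrightarrow> in_span F W (x + y)"
  unfolding in_span_def
proof (elim exE conjE)
  fix c d assume "\<forall>w\<in>W. c w \<in> F" "x = (\<Sum>w\<in>W. c w * w)" "\<forall>w\<in>W. d w \<in> F" "y = (\<Sum>w\<in>W. d w * w)"
  then show "\<exists>c. (\<forall>w\<in>W. c w \<in> F) \<and> x + y = (\<Sum>w\<in>W. c w * w)"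
    by (intro exI[of _ "\<lambda>w. c w + d w"]) (auto simp: sf_add[OF F] sum.distrib distrib_right)
qed

lemma span_scale: "c \<in> F \<Longrightarrow> in_span F W x \<Longrightarrow> in_span F W (c * x)"
  unfolding in_span_def
proof (elim exE conjE)
  fix d assume "c \<in> F" "\<forall>w\<in>W. d w \<in> F" "x = (\<Sum>w\<in>W. d w * w)"
  then show "\<exists>e. (\<forall>w\<in>W. e w \<in> F) \<and> c * x = (\<Sum>w\<in>W. e w * w)"
    by (intro exI[of _ "\<lambda>w. c * d w"]) (auto simp: sf_mult[OF F] sum_distrib_left mult.assoc)
qed

lemma span_sum: "(\<And>i. i \<in> I \<Longrightarrow> in_span F W (f i)) \<Longrightarrow> in_span F W (sum f I)"
  by (induction I rule: infinite_finite_induct) (auto simp: span_0 span_add)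

lemma span_diff: "in_span F W x \<Longrightarrow> in_span F W y \<Longrightarrow> in_span F W (x - y)"
  using span_add[of W x "(-1) * y"] span_scale[of "-1" W y] sf_uminus[OF F sf_1[OF F]] by simp

lemma span_base: "finite W \<Longrightarrow> w \<in> W \<Longrightarrow> in_span F W w"
proof -
  assume W: "finite W" "w \<in> W"
  have "(\<Sum>v\<in>W. (if v = w then 1 else 0) * v) = (\<Sum>v\<in>W. if v = w then v else 0)"
    by (intro sum.cong) auto
  also have "\<dots> = w" using W by (simp add: sum.delta')
  finally show ?thesis unfolding in_span_def using sf_0[OF F] sf_1[OF F]
    by (intro exI[of _ "\<lambda>v. if v = w then 1 else 0"]) auto
qed

lemma span_empty: "in_span F {} z \<longleftrightarrow> z = 0"
  unfolding in_span_def by simp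

lemma span_insert:
  assumes "finite W" "w \<notin> W" "in_span F (insert w W) z"
  shows "\<exists>c u. c \<in> F \<and> in_span F W u \<and> z = c * w + u"
proof -
  from assms(3) obtain c where c: "\<forall>v\<in>insert w W. c v \<in> F" "z = (\<Sum>v\<in>insert w W. c v * v)"
    unfolding in_span_def by blast
  have "z = c w * w + (\<Sum>v\<in>W. c v * v)" using c(2) assms(1,2) by simp
  moreover have "in_span F W (\<Sum>v\<in>W. c v * v)" unfolding in_span_def using c(1) by auto
  ultimately show ?thesis using c(1) by blast
qed

lemma lin_aux: "(A * w + B) - T * (C * w + D) = B - T * D + (A - T * C) * (w :: complex)"
  by (simp add: algebra_simps)

lemma dependence:
  assumes "finite W"
  shows "finite J \<Longrightarrow> card J > card W \<Longrightarrow> (\<forall>j\<in>J. in_span F W (v j)) \<Longrightarrow>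
    \<exists>a. (\<forall>j\<in>J. a j \<in> F) \<and> (\<exists>j\<in>J. a j \<noteq> 0) \<and> (\<Sum>j\<in>J. a j * v j) = 0"
  using assms
proof (induction W arbitrary: J v rule: finite_induct)
  case empty
  then have "J \<noteq> {}" by auto
  then obtain j0 where j0: "j0 \<in> J" by blast
  have v0: "v j = 0" if "j \<in> J" for j using empty.prems(3) that by (simp add: span_empty)
  show ?case using j0 sf_0[OF F] sf_1[OF F] v0
    by (intro exI[of _ "\<lambda>j. if j = j0 then 1 else 0"]) auto
next
  case (insert w W)
  have "\<forall>j\<in>J. \<exists>p. fst p \<in> F \<and> in_span F W (snd p) \<and> v j = fst p * w + snd p"
    using span_insert[OF insert.hyps(1,2)] insert.prems(3) by fastforce
  then obtain f where f: "\<forall>j\<in>J. fst (f j) \<in> F \<and> in_span F W (snd (f j)) \<and> v j = fst (f j) * w + snd (f j)"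
    by (subst (asm) bchoice_iff) blast
  define c where "c j = fst (f j)" for j
  define u where "u j = snd (f j)" for j
  have cu: "\<And>j. j \<in> J \<Longrightarrow> c j \<in> F \<and> in_span F W (u j) \<and> v j = c j * w + u j"
    using f by (simp add: c_def u_def)
  show ?case
  proof (cases "\<forall>j\<in>J. c j = 0")
    case True
    then have "\<forall>j\<in>J. in_span F W (v j)" using cu by auto
    moreover have "card J > card W" using insert.prems(2) insert.hyps by simp
    ultimately show ?thesis using insert.IH[OF insert.prems(1)] by blast
  next
    case False
    then obtain j0 where j0: "j0 \<in> J" "c j0 \<noteq> 0" by blast
    define J' where "J' = J - {j0}"
    define v' where "v' j = v j - (c j / c j0) * v j0" for j
    have fJ': "finite J'" using insert.prems(1) by (simp add: J'_def)
    have cJ': "card J' > card W" using insert.prems(2) insert.hyps j0(1) insert.prems(1)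
      by (simp add: J'_def)
    have "in_span F W (v' j)" if "j \<in> J'" for j
    proof -
      have j: "j \<in> J" using that by (simp add: J'_def)
      have cc: "(c j / c j0) * c j0 = c j" using j0(2) by simp
      have "v' j = (c j * w + u j) - (c j / c j0) * (c j0 * w + u j0)"
        unfolding v'_def using cu[OF j] cu[OF j0(1)] by simp
      also have "\<dots> = u j - (c j / c j0) * u j0 + (c j - (c j / c j0) * c j0) * w"
        by (rule lin_aux)
      also have "\<dots> = u j - (c j / c j0) * u j0" using cc by simp
      finally have eq: "v' j = u j - (c j / c j0) * u j0" .
      have cF: "c j / c j0 \<in> F" using cu[OF j] cu[OF j0(1)] by (simp add: sf_divide[OF F])
      show ?thesis unfolding eq
        by (rule span_diff) (use cu[OF j] cu[OF j0(1)] span_scale[OF cF] in auto)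
    qed
    then obtain a' where a': "\<forall>j\<in>J'. a' j \<in> F" "\<exists>j\<in>J'. a' j \<noteq> 0" "(\<Sum>j\<in>J'. a' j * v' j) = 0"
      using insert.IH[OF fJ' cJ'] by blast
    define b where "b = - (\<Sum>j\<in>J'. a' j * (c j / c j0))"
    define a where "a j = (if j = j0 then b else a' j)" for j
    have bF: "b \<in> F" unfolding b_def using a'(1) cu j0
      by (intro sf_uminus[OF F] sf_sum[OF F] sf_mult[OF F] sf_divide[OF F]) (auto simp: J'_def)
    have J: "J = insert j0 J'" "j0 \<notin> J'" using j0(1) by (auto simp: J'_def)
    have "(\<Sum>j\<in>J'. a j * v j) = (\<Sum>j\<in>J'. a' j * v j)"
      by (rule sum.cong) (use J(2) in \<open>auto simp: a_def\<close>)
    then have "(\<Sum>j\<in>J. a j * v j) = b * v j0 + (\<Sum>j\<in>J'. a' j * v j)"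
      using J fJ' by (simp add: a_def)
    also have "(\<Sum>j\<in>J'. a' j * v j) = (\<Sum>j\<in>J'. a' j * v' j + (a' j * (c j / c j0)) * v j0)"
      by (rule sum.cong) (simp_all add: v'_def right_diff_distrib)
    also have "\<dots> = (\<Sum>j\<in>J'. a' j * v' j) + (\<Sum>j\<in>J'. a' j * (c j / c j0)) * v j0"
      by (simp add: sum.distrib sum_distrib_right)
    finally have "(\<Sum>j\<in>J. a j * v j) = 0" using a'(3) by (simp add: b_def)
    moreover have "\<forall>j\<in>J. a j \<in> F" using a'(1) bF J by (auto simp: a_def)
    moreover have "\<exists>j\<in>J. a j \<noteq> 0" using a'(2) J by (auto simp: a_def)
    ultimately show ?thesis by blast
  qed
qed

lemma alg_from_span:
  assumes W: "finite W" and pw: "\<And>k. in_span F W (z ^ k)"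
  shows "alg_over F z"
proof -
  obtain a where a: "\<forall>j\<in>{0..card W}. a j \<in> F" "\<exists>j\<in>{0..card W}. a j \<noteq> 0"
    "(\<Sum>j\<in>{0..card W}. a j * z ^ j) = 0"
    using dependence[OF W, of "{0..card W}" "\<lambda>j. z ^ j"] pw by auto
  define p where "p = (\<Sum>j\<in>{0..card W}. monom (a j) j)"
  have cp: "coeff p i = (if i \<in> {0..card W} then a i else 0)" for i
    unfolding p_def by (simp add: coeff_sum coeff_monom)
  have "p \<noteq> 0" using a(2) cp by (metis coeff_0)
  moreover have "Fpoly F p" unfolding Fpoly_def using cp a(1) sf_0[OF F] by simp
  moreover have "poly p z = 0" unfolding p_def using a(3) by (simp add: poly_sum poly_monom)
  ultimately show ?thesis unfolding alg_over_def by blast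
qed

end

lemma powers_in_span:
  assumes F: "is_subfield F" and W: "finite W" and one: "in_span F W 1"
    and mul: "\<And>s. in_span F W s \<Longrightarrow> in_span F W (z * s)"
  shows "in_span F W (z ^ k)"
  by (induction k) (auto simp: one mul)

lemma mult_in_span:
  assumes F: "is_subfield F" and W: "finite W" and base: "\<And>w. w \<in> W \<Longrightarrow> in_span F W (x * w)"
    and s: "in_span F W s"
  shows "in_span F W (x * s)"
proof -
  from s obtain c where c: "\<forall>w\<in>W. c w \<in> F" "s = (\<Sum>w\<in>W. c w * w)" unfolding in_span_def by blast
  have "x * s = (\<Sum>w\<in>W. c w * (x * w))" using c(2) by (simp add: sum_distrib_left algebra_simps)
  also have "in_span F W \<dots>"
    by (rule span_sum[OF F], rule span_scale[OF F]) (use c(1) base in auto)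
  finally show ?thesis .
qed

lemma power_reduce:
  assumes F: "is_subfield F" and al: "alg_over F x"
  defines "n \<equiv> degree_over F x"
  shows "x ^ n = - (\<Sum>i<n. coeff (minpoly F x) i * x ^ i)"
proof -
  let ?m = "minpoly F x"
  have "0 = poly ?m x" using minpoly_props(3)[OF F al] by simp
  also have "\<dots> = (\<Sum>i\<le>n. coeff ?m i * x ^ i)" unfolding poly_altdef n_def using minpoly_props(4)[OF F al] by simp
  also have "\<dots> = (\<Sum>i<n. coeff ?m i * x ^ i) + x ^ n"
  proof -
    have "{..n} = insert n {..<n}" by auto
    moreover have "coeff ?m n = 1" using minpoly_props(1,4)[OF F al] by (simp add: n_def)
    ultimately show ?thesis by (simp add: add.commute)
  qed
  finally show ?thesis by (simp add: eq_neg_iff_add_eq_0 add.commute)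
qed

lemma alg_over_add_mult:
  assumes F: "is_subfield F" and ax: "alg_over F x" and ay: "alg_over F y"
  shows "alg_over F (x + y)" "alg_over F (x * y)"
proof -
  define n where "n = degree_over F x"
  define m where "m = degree_over F y"
  define W where "W = (\<lambda>(i, j). x ^ i * y ^ j) ` ({..<n} \<times> {..<m})"
  have fW: "finite W" unfolding W_def by simp
  have n1: "n \<ge> 1" "m \<ge> 1" using degree_over_pos[OF F ax] degree_over_pos[OF F ay] by (auto simp: n_def m_def)
  have inW: "x ^ i * y ^ j \<in> W" if "i < n" "j < m" for i j unfolding W_def using that by auto
  have one: "in_span F W 1" using span_base[OF F fW inW[of 0 0]] n1 by simp
  have cx: "coeff (minpoly F x) i \<in> F" for i using minpoly_props(2)[OF F ax] by (simp add: Fpoly_def)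
  have cy: "coeff (minpoly F y) i \<in> F" for i using minpoly_props(2)[OF F ay] by (simp add: Fpoly_def)
  have mx: "in_span F W (x * s)" if "in_span F W s" for s
  proof (rule mult_in_span[OF F fW _ that])
    fix w assume "w \<in> W"
    then obtain i j where ij: "i < n" "j < m" "w = x ^ i * y ^ j" unfolding W_def by auto
    show "in_span F W (x * w)"
    proof (cases "Suc i < n")
      case True
      then show ?thesis using span_base[OF F fW inW[OF True ij(2)]] ij(3) by (simp add: mult.assoc)
    next
      case False
      then have i: "Suc i = n" using ij(1) by simp
      have "x * w = x ^ n * y ^ j" using ij(3) by (simp add: i[symmetric] mult.assoc)
      also have "\<dots> = (-1) * (\<Sum>k<n. coeff (minpoly F x) k * (x ^ k * y ^ j))"
      proof -
        have pr: "x ^ n = - (\<Sum>k<n. coeff (minpoly F x) k * x ^ k)"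
          unfolding n_def by (rule power_reduce[OF F ax])
        show ?thesis unfolding pr by (simp add: sum_distrib_right mult.assoc)
      qed
      also have "in_span F W \<dots>"
      proof (rule span_scale[OF F], simp add: sf_uminus[OF F] sf_1[OF F], rule span_sum[OF F])
        fix k assume "k \<in> {..<n}"
        then show "in_span F W (coeff (minpoly F x) k * (x ^ k * y ^ j))"
          using span_scale[OF F cx span_base[OF F fW inW[OF _ ij(2)]]] by simp
      qed
      finally show ?thesis .
    qed
  qed
  have my: "in_span F W (y * s)" if "in_span F W s" for s
  proof (rule mult_in_span[OF F fW _ that])
    fix w assume "w \<in> W"
    then obtain i j where ij: "i < n" "j < m" "w = x ^ i * y ^ j" unfolding W_def by auto
    show "in_span F W (y * w)"
    proof (cases "Suc j < m")
      case True
      have yw: "y * w = x ^ i * y ^ Suc j" unfolding ij(3) power_Suc by (rule mult.left_commute)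
      show ?thesis unfolding yw by (rule span_base[OF F fW inW[OF ij(1) True]])
    next
      case False
      then have j: "Suc j = m" using ij(2) by simp
      have "y * w = x ^ i * y ^ m" unfolding ij(3) j[symmetric] power_Suc by (rule mult.left_commute)
      also have "\<dots> = (-1) * (\<Sum>k<m. coeff (minpoly F y) k * (x ^ i * y ^ k))"
      proof -
        have pr: "y ^ m = - (\<Sum>k<m. coeff (minpoly F y) k * y ^ k)"
          unfolding m_def by (rule power_reduce[OF F ay])
        have "x ^ i * (\<Sum>k<m. coeff (minpoly F y) k * y ^ k) = (\<Sum>k<m. coeff (minpoly F y) k * (x ^ i * y ^ k))"
          by (simp add: sum_distrib_left mult.left_commute)
        then show ?thesis by (simp add: pr)
      qed
      also have "in_span F W \<dots>"
      proof (rule span_scale[OF F], simp add: sf_uminus[OF F] sf_1[OF F], rule span_sum[OF F])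
        fix k assume "k \<in> {..<m}"
        then show "in_span F W (coeff (minpoly F y) k * (x ^ i * y ^ k))"
          using span_scale[OF F cy span_base[OF F fW inW[OF ij(1)]]] by simp
      qed
      finally show ?thesis .
    qed
  qed
  show "alg_over F (x + y)"
  proof (rule alg_from_span[OF F fW])
    fix k show "in_span F W ((x + y) ^ k)"
      by (rule powers_in_span[OF F fW one]) (simp add: distrib_right span_add[OF F] mx my)
  qed
  show "alg_over F (x * y)"
  proof (rule alg_from_span[OF F fW])
    fix k show "in_span F W ((x * y) ^ k)"
      by (rule powers_in_span[OF F fW one]) (simp add: mult.assoc mx my)
  qed
qed

lemma algebraic_add: "algebraic (x::complex) \<Longrightarrow> algebraic y \<Longrightarrow> algebraic (x + y)"
proof -
  assume "algebraic x" "algebraic y"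
  then have "alg_over \<rat> x" "alg_over \<rat> y" using algebraic_alg_over subfield_Rats by blast+
  then have "alg_over \<rat> (x + y)" by (rule alg_over_add_mult(1)[OF subfield_Rats])
  then show ?thesis by (rule alg_over_algebraic)
qed

lemma algebraic_mult: "algebraic (x::complex) \<Longrightarrow> algebraic y \<Longrightarrow> algebraic (x * y)"
proof -
  assume "algebraic x" "algebraic y"
  then have "alg_over \<rat> x" "alg_over \<rat> y" using algebraic_alg_over subfield_Rats by blast+
  then have "alg_over \<rat> (x * y)" by (rule alg_over_add_mult(2)[OF subfield_Rats])
  then show ?thesis by (rule alg_over_algebraic)
qed

lemma subfield_algebraic: "is_subfield {x. algebraic x}"
  unfolding is_subfield_def
proof (intro conjI ballI impI)
  fix x y :: complex assume "x \<in> {x. algebraic x}" "y \<in> {x. algebraic x}"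
  then have xy: "algebraic x" "algebraic y" by auto
  show "x + y \<in> {x. algebraic x}" using algebraic_add[OF xy] by simp
  show "x * y \<in> {x. algebraic x}" using algebraic_mult[OF xy] by simp
  have "algebraic (- y)" using xy(2) by simp
  then have "algebraic (x + - y)" using algebraic_add[OF xy(1)] by blast
  then show "x - y \<in> {x. algebraic x}" by simp
next
  fix x assume "x \<in> {x. algebraic x}"
  then show "inverse x \<in> {x. algebraic x}" by (auto intro: algebraic_inverse)
qed auto


section \<open>Integer polynomials\<close>

lemma map_of_int_mult:
  "map_poly (of_int :: int \<Rightarrow> complex) (p * q) = map_poly of_int p * map_poly of_int q"
  by (rule poly_eqI) (simp add: coeff_map_poly coeff_mult)

lemma map_of_int_inj:
  assumes "map_poly (of_int :: int \<Rightarrow> complex) p = map_poly of_int q" shows "p = q"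
proof (rule poly_eqI)
  fix n
  have "coeff (map_poly (of_int :: int \<Rightarrow> complex) p) n = coeff (map_poly of_int q) n" using assms by simp
  then show "coeff p n = coeff q n" by (simp add: coeff_map_poly)
qed

lemma map_of_int_smult:
  "map_poly (of_int :: int \<Rightarrow> complex) (smult c p) = smult (of_int c) (map_poly of_int p)"
  by (rule map_poly_smult) simp_all

lemma map_of_int_uminus:
  "map_poly (of_int :: int \<Rightarrow> complex) (- p) = - map_poly of_int p"
  by (rule poly_eqI) (simp add: coeff_map_poly)

lemma degree_map_of_int: "degree (map_poly (of_int :: int \<Rightarrow> complex) p) = degree p"
  by (rule degree_map_poly) simp

lemma map_of_int_eq_0: "map_poly (of_int :: int \<Rightarrow> complex) p = 0 \<longleftrightarrow> p = 0"
  using map_of_int_inj[of p 0] by auto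

lemma const_factor_unit:
  fixes a b :: "int poly"
  assumes "r = a * b" "Polynomial.content r = 1" "degree b = 0"
  shows "is_unit b"
proof -
  have b: "b = [:coeff b 0:]" using assms(3) by (metis degree_0_id)
  have "Polynomial.content a * Polynomial.content b = 1" using assms(1,2) by (simp add: content_mult)
  then have "Polynomial.content b dvd 1" by (metis dvd_triv_right)
  then have "coeff b 0 dvd 1" by (subst (asm) b) simp
  then show ?thesis by (subst b) (simp add: is_unit_const_poly_iff)
qed

lemma min_int_poly_ex:
  assumes "algebraic z"
  shows "\<exists>p. is_min_int_poly z p"
proof -
  obtain q0 where "q0 \<noteq> 0" "poly (map_poly of_int q0) z = 0" using assms by (elim algebraicE')
  then obtain q :: "int poly" where q: "q \<noteq> 0 \<and> poly (map_poly of_int q) z = 0"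
     and qmin: "\<And>r. r \<noteq> 0 \<and> poly (map_poly of_int r) z = 0 \<longrightarrow> degree q \<le> degree r"
    using ex_has_least_nat[of "\<lambda>q::int poly. q \<noteq> 0 \<and> poly (map_poly of_int q) z = 0" q0 degree] by blast
  define r where "r = primitive_part q"
  define c where "c = Polynomial.content q"
  have r0: "r \<noteq> 0" using q by (simp add: r_def)
  have dr: "degree r = degree q" by (simp add: r_def)
  have cr: "Polynomial.content r = 1" using q by (simp add: r_def)
  have qr: "q = smult c r" unfolding r_def c_def by simp
  have c0: "c \<noteq> 0" using q by (simp add: c_def)
  have rz: "poly (map_poly of_int r) z = 0"
    using q c0 unfolding qr by (simp add: map_of_int_smult)
  have irr: "irreducible r"
  proof (rule irreducibleI)
    show "r \<noteq> 0" by (rule r0)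
    show "\<not> r dvd 1"
    proof
      assume "r dvd 1"
      then obtain a where "r = [:a:]" "a dvd 1" by (auto simp: is_unit_poly_iff)
      then show False using rz r0 by (simp add: map_poly_pCons)
    qed
  next
    fix a b assume ab: "r = a * b"
    have a0: "a \<noteq> 0" "b \<noteq> 0" using ab r0 by auto
    have "poly (map_poly of_int a) z * poly (map_poly of_int b) z = 0"
      using rz ab by (simp add: map_of_int_mult)
    then have ror: "poly (map_poly of_int a) z = 0 \<or> poly (map_poly of_int b) z = 0" by simp
    have dab: "degree r = degree a + degree b" using ab a0 by (simp add: degree_mult_eq)
    show "a dvd 1 \<or> b dvd 1"
    proof (cases "poly (map_poly of_int a) z = 0")
      case True
      then have "degree q \<le> degree a" using qmin a0 by blast
      then have "degree b = 0" using dab dr by simp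
      then show ?thesis using const_factor_unit[OF ab cr] by simp
    next
      case False
      then have "poly (map_poly of_int b) z = 0" using ror by simp
      then have "degree q \<le> degree b" using qmin a0 by blast
      then have "degree a = 0" using dab dr by simp
      moreover have "r = b * a" using ab by simp
      ultimately show ?thesis using const_factor_unit[of r b a] cr by simp
    qed
  qed
  show ?thesis
  proof (cases "lead_coeff r > 0")
    case True then show ?thesis using irr rz unfolding is_min_int_poly_def by blast
  next
    case False
    have "lead_coeff r \<noteq> 0" using r0 by simp
    then have "lead_coeff r < 0" using False by linarith
    then have "lead_coeff (-r) > 0" by simp
    moreover have "irreducible (-r)"
    proof -
      have "-r = [:-1:] * r" by simp
      moreover have "is_unit [:-1::int:]" by (simp add: is_unit_const_poly_iff)
      ultimately show ?thesis using irr irreducible_mult_unit_left[of "[:-1::int:]" r] by simp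
    qed
    moreover have "poly (map_poly of_int (-r)) z = 0" using rz by (simp add: map_of_int_uminus)
    ultimately show ?thesis unfolding is_min_int_poly_def by blast
  qed
qed

lemma min_int_poly_props:
  assumes "algebraic z"
  shows "is_min_int_poly z (min_int_poly z)"
  using someI_ex[OF min_int_poly_ex[OF assms]] unfolding min_int_poly_def .

lemma clear_denoms:
  assumes "Fpoly \<rat> r"
  shows "\<exists>c::int. c \<noteq> 0 \<and> (\<exists>r'. smult (of_int c) r = map_poly of_int r')"
proof -
  have "\<forall>i. \<exists>b::int. b \<noteq> 0 \<and> of_int b * coeff r i \<in> \<int>"
  proof
    fix i
    have "coeff r i \<in> \<rat>" using assms by (simp add: Fpoly_def)
    then obtain a b :: int where ab: "b > 0" "coeff r i = of_int a / of_int b" by (elim Rats_cases')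
    then have "of_int b * coeff r i = of_int a" by simp
    then show "\<exists>b::int. b \<noteq> 0 \<and> of_int b * coeff r i \<in> \<int>" using ab(1)
      by (intro exI[of _ b]) auto
  qed
  then obtain B where B: "\<And>i. B i \<noteq> 0" "\<And>i. of_int (B i) * coeff r i \<in> \<int>" by metis
  define c where "c = (\<Prod>i\<le>degree r. B i)"
  have c0: "c \<noteq> 0" unfolding c_def using B(1) by simp
  have "coeff (smult (of_int c) r) i \<in> \<int>" for i
  proof (cases "i \<le> degree r")
    case True
    have "c = B i * (\<Prod>j\<in>{..degree r} - {i}. B j)" unfolding c_def using True
      by (subst prod.remove[of _ i]) auto
    then have "coeff (smult (of_int c) r) i = (of_int (B i) * coeff r i) * of_int (\<Prod>j\<in>{..degree r} - {i}. B j)"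
      by (simp add: algebra_simps)
    also have "\<dots> \<in> \<int>" by (rule Ints_mult[OF B(2) Ints_of_int])
    finally show ?thesis .
  next
    case False then show ?thesis by (simp add: coeff_eq_0)
  qed
  then obtain r' where "smult (of_int c) r = map_poly of_int r'" by (elim intpolyE) auto
  then show ?thesis using c0 by blast
qed

lemma gauss_degree:
  assumes mp: "is_min_int_poly z p"
  shows "degree_over \<rat> z = degree p"
    and "\<exists>a. a \<noteq> 0 \<and> map_poly of_int p = smult a (minpoly \<rat> z)"
proof -
  let ?P = "map_poly (of_int :: int \<Rightarrow> complex) p"
  have irr: "irreducible p" and pz: "poly ?P z = 0" using mp by (auto simp: is_min_int_poly_def)
  have p0: "p \<noteq> 0" using irr by auto
  have P0: "?P \<noteq> 0" using p0 by (simp add: map_of_int_eq_0)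
  have FP: "Fpoly \<rat> ?P" by (rule Fpoly_of_int[OF subfield_Rats])
  have al: "alg_over \<rat> z" unfolding alg_over_def using P0 FP pz by blast
  let ?m = "minpoly \<rat> z"
  have m: "lead_coeff ?m = 1" "Fpoly \<rat> ?m" "poly ?m z = 0" "degree ?m = degree_over \<rat> z" "?m \<noteq> 0"
    using minpoly_props[OF subfield_Rats al] minpoly_nz[OF subfield_Rats al] by auto
  obtain s where s: "Fpoly \<rat> s" "?P = s * ?m" using minpoly_dvd[OF subfield_Rats al FP pz] by blast
  have s0: "s \<noteq> 0" using s(2) P0 by auto
  obtain c1 m' where c1: "c1 \<noteq> 0" "smult (of_int c1) ?m = map_poly of_int m'" using clear_denoms[OF m(2)] by blast
  obtain c2 s' where c2: "c2 \<noteq> 0" "smult (of_int c2) s = map_poly of_int s'" using clear_denoms[OF s(1)] by blast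
  have "map_poly (of_int :: int \<Rightarrow> complex) (smult (c1 * c2) p) = map_poly of_int (m' * s')"
    unfolding map_of_int_smult map_of_int_mult c1(2)[symmetric] c2(2)[symmetric] s(2)
    by (simp add: mult.commute)
  then have eq: "smult (c1 * c2) p = m' * s'" by (rule map_of_int_inj)
  have "prime_elem p" by (rule irreducible_imp_prime_poly[OF irr])
  moreover have "p dvd m' * s'" unfolding eq[symmetric] by (simp add: dvd_smult)
  ultimately have "p dvd m' \<or> p dvd s'" by (simp add: prime_elem_dvd_mult_iff)
  moreover have dm': "degree m' = degree ?m" "m' \<noteq> 0"
  proof -
    have "degree (map_poly (of_int :: int \<Rightarrow> complex) m') = degree ?m" using c1 by (simp add: c1(2)[symmetric])
    then show "degree m' = degree ?m" by (simp add: degree_map_of_int)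
    have "map_poly (of_int :: int \<Rightarrow> complex) m' \<noteq> 0" using c1 m(5) by (simp add: c1(2)[symmetric])
    then show "m' \<noteq> 0" by (simp add: map_of_int_eq_0)
  qed
  moreover have ds': "degree s' = degree s" "s' \<noteq> 0"
  proof -
    have "degree (map_poly (of_int :: int \<Rightarrow> complex) s') = degree s" using c2 by (simp add: c2(2)[symmetric])
    then show "degree s' = degree s" by (simp add: degree_map_of_int)
    have "map_poly (of_int :: int \<Rightarrow> complex) s' \<noteq> 0" using c2 s0 by (simp add: c2(2)[symmetric])
    then show "s' \<noteq> 0" by (simp add: map_of_int_eq_0)
  qed
  moreover have dP: "degree p = degree s + degree ?m"
    using s(2) s0 m(5) by (simp add: degree_mult_eq degree_map_of_int[symmetric])
  moreover have "degree ?m \<ge> 1" using degree_over_pos[OF subfield_Rats al] m(4) by simp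
  moreover have "degree_over \<rat> z \<le> degree p"
    using degree_over_le[OF P0 FP pz] by (simp add: degree_map_of_int)
  ultimately have deq: "degree p = degree ?m"
  proof (elim disjE)
    assume "p dvd m'"
    from dvd_imp_degree_le[OF this dm'(2)] dm'(1) \<open>degree_over \<rat> z \<le> degree p\<close> m(4)
    show ?thesis by simp
  next
    assume "p dvd s'"
    from dvd_imp_degree_le[OF this ds'(2)] ds'(1) dP \<open>degree ?m \<ge> 1\<close>
    show ?thesis by simp
  qed
  then show "degree_over \<rat> z = degree p" using m(4) by simp
  have "degree s = 0" using dP deq by simp
  define a where "a = coeff s 0"
  have sa: "s = [:a:]" unfolding a_def using \<open>degree s = 0\<close> by (metis degree_0_id)
  have "a \<noteq> 0" using s0 sa by auto
  moreover have "?P = [:a:] * ?m" using s(2) sa by simp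
  ultimately have "?P = smult a ?m \<and> a \<noteq> 0" by simp
  then show "\<exists>a. a \<noteq> 0 \<and> map_poly of_int p = smult a (minpoly \<rat> z)" by blast
qed


section \<open>Conjugates\<close>

context
  fixes \<alpha> :: complex
  assumes alg: "algebraic \<alpha>"
begin

abbreviation "PP \<equiv> map_poly (of_int :: int \<Rightarrow> complex) (min_int_poly \<alpha>)"

lemma mip: "irreducible (min_int_poly \<alpha>)" "lead_coeff (min_int_poly \<alpha>) > 0" "poly PP \<alpha> = 0"
  using min_int_poly_props[OF alg] by (auto simp: is_min_int_poly_def)

lemma PP_nz: "PP \<noteq> 0"
  using mip(1) by (auto simp: map_of_int_eq_0)

lemma conj_def': "conjugates \<alpha> = {z. poly PP z = 0}"
  by (simp add: conjugates_def)

lemma conj_finite: "finite (conjugates \<alpha>)"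
  unfolding conj_def' using PP_nz by (rule poly_roots_finite)

lemma alpha_conj: "\<alpha> \<in> conjugates \<alpha>"
  using mip(3) by (simp add: conj_def')

lemma conj_algebraic: "z \<in> conjugates \<alpha> \<Longrightarrow> algebraic z"
  unfolding conj_def'
  by (rule algebraicI[of PP]) (auto simp: coeff_map_poly PP_nz)

lemma al_Q: "alg_over \<rat> \<alpha>"
  by (rule algebraic_alg_over[OF alg subfield_Rats])

lemma conj_minpoly: "z \<in> conjugates \<alpha> \<longleftrightarrow> poly (minpoly \<rat> \<alpha>) z = 0"
proof -
  obtain a where a: "a \<noteq> 0" "PP = smult a (minpoly \<rat> \<alpha>)"
    using gauss_degree(2)[OF min_int_poly_props[OF alg]] by blast
  show ?thesis unfolding conj_def' using a by simp
qed

lemma degree_minpoly_Q: "degree (minpoly \<rat> \<alpha>) = alg_degree \<alpha>"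
  using gauss_degree(1)[OF min_int_poly_props[OF alg]] minpoly_props(4)[OF subfield_Rats al_Q]
  by (simp add: alg_degree_def)

lemma card_conj: "card (conjugates \<alpha>) = alg_degree \<alpha>"
proof -
  let ?m = "minpoly \<rat> \<alpha>"
  have rs: "rsquarefree ?m" by (rule minpoly_rsquarefree[OF subfield_Rats al_Q])
  have "smult (lead_coeff ?m) (\<Prod>z|poly ?m z = 0. [:-z, 1:]) = ?m"
    by (rule complex_poly_decompose_rsquarefree[OF rs])
  then have "(\<Prod>z|poly ?m z = 0. [:-z, 1:]) = ?m"
    using minpoly_props(1)[OF subfield_Rats al_Q] by simp
  then have "degree ?m = degree (\<Prod>z|poly ?m z = 0. [:-z, 1:])" by simp
  also have "\<dots> = (\<Sum>z|poly ?m z = 0. degree [:-z, 1::complex:])"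
    by (rule degree_prod_sum_eq) simp
  also have "\<dots> = card {z. poly ?m z = 0}" by simp
  also have "{z. poly ?m z = 0} = conjugates \<alpha>" using conj_minpoly by auto
  finally show ?thesis using degree_minpoly_Q by simp
qed

lemma conj_minpoly_eq: "z \<in> conjugates \<alpha> \<Longrightarrow> minpoly \<rat> z = minpoly \<rat> \<alpha>"
  using minpoly_shared[OF subfield_Rats al_Q] conj_minpoly by blast

lemma zero_not_conj:
  assumes "alg_degree \<alpha> \<ge> 2"
  shows "0 \<notin> conjugates \<alpha>"
proof
  assume "0 \<in> conjugates \<alpha>"
  then have e: "minpoly \<rat> 0 = minpoly \<rat> \<alpha>" by (rule conj_minpoly_eq)
  have a0: "alg_over \<rat> 0" by (rule algebraic_alg_over[OF _ subfield_Rats]) simp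
  have F1: "Fpoly \<rat> [:0, 1:]" by (intro Fpoly_pCons Fpoly_const subfield_Rats) auto
  have "degree_over \<rat> 0 \<le> degree [:0::complex, 1:]"
    by (rule degree_over_le[OF _ F1]) auto
  then have "degree (minpoly \<rat> 0) \<le> 1" using minpoly_props(4)[OF subfield_Rats a0] by simp
  then show False using e degree_minpoly_Q assms by simp
qed

lemma conj_cnj: "z \<in> conjugates \<alpha> \<Longrightarrow> cnj z \<in> conjugates \<alpha>"
proof -
  assume "z \<in> conjugates \<alpha>"
  then have "poly PP z = 0" by (simp add: conj_def')
  then have "cnj (poly PP z) = 0" by simp
  moreover have "cnj (poly PP z) = poly PP (cnj z)"
    by (rule poly_cnj_real) (simp add: coeff_map_poly)
  ultimately show ?thesis by (simp add: conj_def')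
qed

lemma hom_conj:
  assumes L: "is_subfield L" and h: "hom_on L \<tau>" and z: "z \<in> L" "z \<in> conjugates \<alpha>"
  shows "\<tau> z \<in> conjugates \<alpha>"
proof -
  have "map_poly \<tau> PP = PP"
    by (rule poly_eqI) (simp add: coeff_map_hom[OF L h] coeff_map_poly hom_of_int[OF L h])
  moreover have "\<tau> (poly PP z) = poly (map_poly \<tau> PP) (\<tau> z)"
    by (rule hom_poly[OF L h Fpoly_of_int[OF L] z(1)])
  moreover have "poly PP z = 0" using z(2) by (simp add: conj_def')
  ultimately show ?thesis by (simp add: conj_def' hom_0[OF L h])
qed

end

lemma prod_lt_1:
  fixes f :: "'a \<Rightarrow> real"
  assumes "finite S" "S \<noteq> {}" "\<And>x. x \<in> S \<Longrightarrow> 0 \<le> f x \<and> f x < 1"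
  shows "prod f S < 1"
  using assms
proof (induction S rule: finite_ne_induct)
  case (singleton x) then show ?case by simp
next
  case (insert x F)
  have "prod f F < 1" "0 \<le> prod f F" using insert by (auto intro: prod_nonneg)
  moreover have "0 \<le> f x" "f x < 1" using insert by auto
  ultimately have "f x * prod f F \<le> f x" by (intro mult_left_le) auto
  with \<open>f x < 1\<close> have "f x * prod f F < 1" by linarith
  then show ?case using insert by simp
qed

lemma key_perm:
  fixes C :: "complex set" and \<tau> :: "complex \<Rightarrow> complex"
  assumes C: "finite C" "0 \<notin> C" and inj: "inj_on \<tau> C" and into: "\<tau> ` C \<subseteq> C"
    and eq: "(\<Prod>z\<in>{z\<in>C. 1 \<le> cmod z}. cmod (\<tau> z)) = (\<Prod>z\<in>{z\<in>C. 1 \<le> cmod z}. cmod z)"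
  shows "\<tau> ` {z\<in>C. 1 \<le> cmod z} = {z\<in>C. 1 \<le> cmod z}"
proof (rule ccontr)
  define L where "L = {z\<in>C. 1 \<le> cmod z}"
  define T where "T = \<tau> ` L"
  assume ne: "\<tau> ` {z\<in>C. 1 \<le> cmod z} \<noteq> {z\<in>C. 1 \<le> cmod z}"
  then have TL: "T \<noteq> L" by (simp add: T_def L_def)
  have fL: "finite L" using C(1) by (simp add: L_def)
  have fT: "finite T" using fL by (simp add: T_def)
  have TC: "T \<subseteq> C" using into by (auto simp: T_def L_def)
  have injL: "inj_on \<tau> L" using inj by (rule inj_on_subset) (auto simp: L_def)
  have cT: "card T = card L" unfolding T_def using injL by (rule card_image)
  have pT: "(\<Prod>z\<in>L. cmod (\<tau> z)) = (\<Prod>z\<in>T. cmod z)"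
    unfolding T_def using injL by (simp add: prod.reindex)
  have "T - L \<noteq> {}"
  proof
    assume "T - L = {}"
    then have "T \<subseteq> L" by auto
    with cT fL have "T = L" by (simp add: card_subset_eq)
    with TL show False by simp
  qed
  have nz: "\<And>z. z \<in> C \<Longrightarrow> cmod z > 0" using C(2) by fastforce
  have s1: "(\<Prod>z\<in>T. cmod z) = (\<Prod>z\<in>T \<inter> L. cmod z) * (\<Prod>z\<in>T - L. cmod z)"
    by (rule prod.Int_Diff[OF fT])
  have "(\<Prod>z\<in>L. cmod z) = (\<Prod>z\<in>L \<inter> T. cmod z) * (\<Prod>z\<in>L - T. cmod z)"
    by (rule prod.Int_Diff[OF fL])
  moreover have "L \<inter> T = T \<inter> L" by auto
  ultimately have s2: "(\<Prod>z\<in>L. cmod z) = (\<Prod>z\<in>T \<inter> L. cmod z) * (\<Prod>z\<in>L - T. cmod z)" by simp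
  have l1: "(\<Prod>z\<in>T - L. cmod z) < 1"
    by (rule prod_lt_1) (use fT \<open>T - L \<noteq> {}\<close> TC in \<open>auto simp: L_def\<close>)
  have g1: "(\<Prod>z\<in>L - T. cmod z) \<ge> 1"
    by (rule prod_ge_1) (auto simp: L_def)
  have p0: "(\<Prod>z\<in>T \<inter> L. cmod z) > 0"
    by (rule prod_pos) (use nz in \<open>auto simp: L_def\<close>)
  have "(\<Prod>z\<in>T \<inter> L. cmod z) * (\<Prod>z\<in>T - L. cmod z) < (\<Prod>z\<in>T \<inter> L. cmod z) * 1"
    using l1 p0 by (rule mult_strict_left_mono)
  also have "\<dots> \<le> (\<Prod>z\<in>T \<inter> L. cmod z) * (\<Prod>z\<in>L - T. cmod z)"
    using p0 g1 by (intro mult_left_mono) auto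
  finally have "(\<Prod>z\<in>T. cmod z) < (\<Prod>z\<in>L. cmod z)" using s1 s2 by simp
  then show False using eq pT by (simp add: L_def)
qed


lemma descent:
  assumes K: "is_subfield K" and al: "alg_over K c"
    and only: "\<And>y. poly (minpoly K c) y = 0 \<Longrightarrow> y = c"
  shows "c \<in> K"
proof -
  let ?m = "minpoly K c"
  have m: "lead_coeff ?m = 1" "Fpoly K ?m" "poly ?m c = 0" "?m \<noteq> 0"
    using minpoly_props[OF K al] minpoly_nz[OF K al] by auto
  obtain h where h: "?m = [:-c, 1:] * h" using m(3) by (auto simp: poly_eq_0_iff_dvd elim!: dvdE)
  have h0: "h \<noteq> 0" using h m(4) by auto
  show ?thesis
  proof (cases "degree h = 0")
    case True
    define h0' where "h0' = coeff h 0"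
    have hh: "h = [:h0':]" unfolding h0'_def using True by (metis degree_0_id)
    have "lead_coeff ?m = h0'" unfolding h hh by simp
    then have "h0' = 1" using m(1) by simp
    then have "?m = [:-c, 1:]" using h hh by simp
    then have "coeff ?m 0 = -c" by simp
    moreover have "coeff ?m 0 \<in> K" using m(2) by (simp add: Fpoly_def)
    ultimately have "-c \<in> K" by simp
    from sf_uminus[OF K this] show ?thesis by simp
  next
    case False
    then have "\<not> constant (poly h)" by (simp add: constant_degree)
    then obtain y where y: "poly h y = 0" using fundamental_theorem_of_algebra by blast
    then have "poly ?m y = 0" unfolding h by simp
    then have "y = c" by (rule only)
    then obtain h2 where h2: "h = [:-c, 1:] * h2" using y by (auto simp: poly_eq_0_iff_dvd elim!: dvdE)
    have q0: "poly [:-c, 1:] c = 0" by simp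
    have "poly (pderiv ?m) c = 0" unfolding h h2
      by (simp only: pderiv_mult poly_add poly_mult q0 mult_zero_left mult_zero_right add_0_left add_0_right)
    then show ?thesis using minpoly_simple[OF K al] by simp
  qed
qed

lemma count_dvd:
  assumes K: "is_subfield K" and m1: "m \<ge> 1"
  shows "Fpoly K f \<Longrightarrow> lead_coeff f = 1 \<Longrightarrow> (\<And>z. poly f z = 0 \<Longrightarrow> alg_over K z \<and> degree_over K z = m)
    \<Longrightarrow> m dvd degree f"
proof (induction "degree f" arbitrary: f rule: less_induct)
  case (less f)
  show ?case
  proof (cases "degree f = 0")
    case True then show ?thesis by simp
  next
    case False
    then have "\<not> constant (poly f)" by (simp add: constant_degree)
    then obtain z where z: "poly f z = 0" using fundamental_theorem_of_algebra by blast
    have az: "alg_over K z" "degree_over K z = m" using less.prems(3)[OF z] by auto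
    obtain s where s: "Fpoly K s" "f = s * minpoly K z" using minpoly_dvd[OF K az(1) less.prems(1) z] by blast
    have f0: "f \<noteq> 0" using less.prems(2) by auto
    have s0: "s \<noteq> 0" using s(2) f0 by auto
    have df: "degree f = degree s + m"
      using s(2) s0 minpoly_nz[OF K az(1)] minpoly_props(4)[OF K az(1)] az(2) by (simp add: degree_mult_eq)
    have ls: "lead_coeff s = 1"
      using less.prems(2) s(2) minpoly_props(1)[OF K az(1)] by (simp add: lead_coeff_mult)
    have rs: "poly s y = 0 \<Longrightarrow> alg_over K y \<and> degree_over K y = m" for y
      using less.prems(3)[of y] s(2) by simp
    have "degree s < degree f" using df m1 by simp
    from less.hyps[OF this s(1) ls rs] have "m dvd degree s" .
    then show ?thesis using df by simp
  qed
qed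

lemma prod_lin_props:
  fixes S :: "complex set"
  assumes "finite S"
  shows "lead_coeff (\<Prod>z\<in>S. [:-z, 1:]) = 1" "degree (\<Prod>z\<in>S. [:-z, 1:]) = card S"
    "poly (\<Prod>z\<in>S. [:-z, 1:]) y = 0 \<longleftrightarrow> y \<in> S"
proof -
  show "lead_coeff (\<Prod>z\<in>S. [:-z, 1:]) = 1" by (simp add: lead_coeff_prod)
  have "degree (\<Prod>z\<in>S. [:-z, 1:]) = (\<Sum>z\<in>S. degree [:-z, 1::complex:])"
    by (rule degree_prod_sum_eq) simp
  then show "degree (\<Prod>z\<in>S. [:-z, 1:]) = card S" by simp
  show "poly (\<Prod>z\<in>S. [:-z, 1:]) y = 0 \<longleftrightarrow> y \<in> S" using assms by (simp add: poly_prod)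
qed

lemma algebraic_power: "algebraic (x :: complex) \<Longrightarrow> algebraic (x ^ n)"
  by (induction n) (auto intro: algebraic_mult)

lemma height_power:
  assumes alg: "algebraic \<alpha>" and d: "alg_degree \<alpha> = d" "d \<ge> 1" and h: "weil_height \<alpha> = H"
  shows "H ^ d = real_of_int (lead_coeff (min_int_poly \<alpha>)) * (\<Prod>z\<in>conjugates \<alpha>. max 1 (cmod z))"
proof -
  define X where "X = real_of_int (lead_coeff (min_int_poly \<alpha>)) * (\<Prod>z\<in>conjugates \<alpha>. max 1 (cmod z))"
  have "lead_coeff (min_int_poly \<alpha>) \<ge> 1" using mip(2)[OF alg] by simp
  moreover have "(\<Prod>z\<in>conjugates \<alpha>. max 1 (cmod z)) \<ge> 1" by (rule prod_ge_1) simp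
  ultimately have "1 * 1 \<le> X" unfolding X_def by (intro mult_mono) auto
  then have X1: "X \<ge> 1" by simp
  have HX: "H = X powr (1 / real d)" using h d unfolding weil_height_def X_def by simp
  have "H ^ d = (X powr (1 / real d)) powr (real d)" unfolding HX using X1 by (subst powr_realpow) auto
  also have "\<dots> = X" using d X1 by (simp add: powr_powr)
  finally show ?thesis unfolding X_def .
qed


definition Lg :: "complex \<Rightarrow> complex set" where "Lg \<alpha> = {z \<in> conjugates \<alpha>. 1 \<le> cmod z}"
definition Sm :: "complex \<Rightarrow> complex set" where "Sm \<alpha> = {z \<in> conjugates \<alpha>. cmod z < 1}"
definition P0 :: "complex \<Rightarrow> complex" where
  "P0 \<alpha> = of_int (lead_coeff (min_int_poly \<alpha>)) * (\<Prod>z\<in>Lg \<alpha>. z)"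

context
  fixes k d :: nat and H :: real and \<alpha> :: complex
  assumes kd: "0 < k" "k < d" and Halg: "algebraic (complex_of_real H)" and H1: "H \<ge> 1"
    and A: "\<alpha> \<in> A_set k d H"
begin

lemma alg: "algebraic \<alpha>" and dal: "alg_degree \<alpha> = d" and hH: "weil_height \<alpha> = H"
  and kSm: "card (Sm \<alpha>) = k"
  using A by (auto simp: A_set_def Sm_def)

lemma d2: "d \<ge> 2" using kd by linarith

lemma fLg: "finite (Lg \<alpha>)" using conj_finite[OF alg] by (simp add: Lg_def)

lemma gamma_rep: "\<exists>s. (s = 1 \<or> s = -1) \<and> complex_of_real (H ^ d) = s * P0 \<alpha>"
proof -
  let ?C = "conjugates \<alpha>"
  define a0 where "a0 = lead_coeff (min_int_poly \<alpha>)"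
  have a0: "a0 > 0" using mip(2)[OF alg] by (simp add: a0_def)
  have Hd: "H ^ d = real_of_int a0 * (\<Prod>z\<in>?C. max 1 (cmod z))"
    using height_power[OF alg dal _ hH] d2 by (simp add: a0_def)
  have "(\<Prod>z\<in>?C. max 1 (cmod z)) = (\<Prod>z\<in>Lg \<alpha>. cmod z)"
    by (rule prod.mono_neutral_cong_right) (use conj_finite[OF alg] in \<open>auto simp: Lg_def\<close>)
  then have Hd2: "H ^ d = cmod (P0 \<alpha>)" unfolding Hd P0_def a0_def[symmetric]
    using a0 by (simp add: norm_mult prod_norm)
  have cL: "cnj ` Lg \<alpha> = Lg \<alpha>"
    by (rule endo_inj_surj[OF fLg]) (auto simp: Lg_def conj_cnj[OF alg] inj_on_def)
  have "cnj (P0 \<alpha>) = P0 \<alpha>"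
  proof -
    have "cnj (P0 \<alpha>) = of_int a0 * (\<Prod>z\<in>Lg \<alpha>. cnj z)" by (simp add: P0_def a0_def)
    also have "(\<Prod>z\<in>Lg \<alpha>. cnj z) = (\<Prod>z\<in>cnj ` Lg \<alpha>. z)" by (subst prod.reindex) (auto simp: inj_on_def)
    also have "\<dots> = (\<Prod>z\<in>Lg \<alpha>. z)" using cL by simp
    finally show ?thesis by (simp add: P0_def a0_def)
  qed
  then have "P0 \<alpha> \<in> \<real>" by (simp add: Reals_cnj_iff)
  then obtain r where r: "P0 \<alpha> = complex_of_real r" by (auto elim: Reals_cases)
  show ?thesis
  proof (cases "r \<ge> 0")
    case True
    have "complex_of_real (H ^ d) = 1 * P0 \<alpha>" unfolding Hd2 r using True by simp
    then show ?thesis by blast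
  next
    case False
    have "complex_of_real (H ^ d) = (-1) * P0 \<alpha>" unfolding Hd2 r using False by simp
    then show ?thesis by blast
  qed
qed

lemma stab:
  assumes L: "is_subfield L" and h: "hom_on L \<tau>" and CL: "conjugates \<alpha> \<subseteq> L"
    and fx: "\<tau> (complex_of_real (H ^ d)) = complex_of_real (H ^ d)"
  shows "\<tau> ` Lg \<alpha> = Lg \<alpha>" "\<tau> ` conjugates \<alpha> = conjugates \<alpha>" "\<tau> ` Sm \<alpha> = Sm \<alpha>"
proof -
  let ?C = "conjugates \<alpha>"
  have into: "\<tau> ` ?C \<subseteq> ?C" using hom_conj[OF alg L h] CL by auto
  have inj: "inj_on \<tau> ?C" using hom_inj[OF L h] CL by (rule inj_on_subset)
  show C: "\<tau> ` ?C = ?C" by (rule endo_inj_surj[OF conj_finite[OF alg] into inj])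
  have LgL: "Lg \<alpha> \<subseteq> L" using CL by (auto simp: Lg_def)
  have pL: "(\<Prod>z\<in>Lg \<alpha>. z) \<in> L" by (rule sf_prod[OF L]) (use LgL in auto)
  have P0L: "P0 \<alpha> \<in> L" unfolding P0_def by (rule sf_mult[OF L sf_of_int[OF L] pL])
  obtain s where s: "s = 1 \<or> s = -1" "complex_of_real (H ^ d) = s * P0 \<alpha>" using gamma_rep by blast
  have sL: "s \<in> L" using s(1) sf_1[OF L] sf_uminus[OF L sf_1[OF L]] by auto
  have ts: "\<tau> s = s" using s(1) hom_1[OF L h] hom_uminus[OF L h sf_1[OF L]] by auto
  have "s * P0 \<alpha> = \<tau> (s * P0 \<alpha>)" using fx s(2) by simp
  also have "\<dots> = s * \<tau> (P0 \<alpha>)" using hom_mult[OF L h sL P0L] ts by simp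
  finally have e1: "P0 \<alpha> = \<tau> (P0 \<alpha>)" using s(1) by auto
  have tP: "\<tau> (P0 \<alpha>) = of_int (lead_coeff (min_int_poly \<alpha>)) * (\<Prod>z\<in>Lg \<alpha>. \<tau> z)"
    unfolding P0_def hom_mult[OF L h sf_of_int[OF L] pL] hom_of_int[OF L h]
    using hom_prod[OF L h, of "Lg \<alpha>" "\<lambda>z. z"] LgL by auto
  then have "(\<Prod>z\<in>Lg \<alpha>. \<tau> z) = (\<Prod>z\<in>Lg \<alpha>. z)"
  proof -
    have "min_int_poly \<alpha> \<noteq> 0" using mip(2)[OF alg] by auto
    then show ?thesis using e1 tP unfolding P0_def by auto
  qed
  then have "(\<Prod>z\<in>Lg \<alpha>. cmod (\<tau> z)) = (\<Prod>z\<in>Lg \<alpha>. cmod z)" by (simp add: prod_norm)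
  then show Lg: "\<tau> ` Lg \<alpha> = Lg \<alpha>" unfolding Lg_def
    by (intro key_perm conj_finite[OF alg] zero_not_conj[OF alg] inj into) (use dal d2 in auto)
  have "Sm \<alpha> = ?C - Lg \<alpha>" by (auto simp: Sm_def Lg_def)
  moreover have "\<tau> ` (?C - Lg \<alpha>) = \<tau> ` ?C - \<tau> ` Lg \<alpha>"
    by (rule inj_on_image_set_diff[OF inj]) (auto simp: Lg_def)
  ultimately show "\<tau> ` Sm \<alpha> = Sm \<alpha>" using C Lg by simp
qed

end


lemma map_lin_hom:
  assumes L: "is_subfield L" and h: "hom_on L \<tau>" and z: "z \<in> L"
  shows "map_poly \<tau> [:-z, 1:] = [:- \<tau> z, 1:]"
  using hom_0[OF L h] hom_1[OF L h] hom_uminus[OF L h z] by (simp add: map_poly_pCons)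

lemma Fpoly_lin: "is_subfield F \<Longrightarrow> z \<in> F \<Longrightarrow> Fpoly F [:-z, 1:]"
  by (intro Fpoly_pCons Fpoly_const sf_uminus sf_1) auto

lemma preimage_subfield:
  assumes L: "is_subfield L" and h: "hom_on L \<tau>" and K: "is_subfield K"
  shows "is_subfield {x \<in> L. \<tau> x \<in> K}"
  unfolding is_subfield_def
proof (intro conjI ballI impI)
  show "0 \<in> {x \<in> L. \<tau> x \<in> K}" using sf_0[OF L] sf_0[OF K] hom_0[OF L h] by simp
  show "1 \<in> {x \<in> L. \<tau> x \<in> K}" using sf_1[OF L] sf_1[OF K] hom_1[OF L h] by simp
next
  fix x y assume xy: "x \<in> {x \<in> L. \<tau> x \<in> K}" "y \<in> {x \<in> L. \<tau> x \<in> K}"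
  then have xy': "x \<in> L" "y \<in> L" "\<tau> x \<in> K" "\<tau> y \<in> K" by auto
  show "x + y \<in> {x \<in> L. \<tau> x \<in> K}" using xy' sf_add[OF L] sf_add[OF K] hom_add[OF L h] by simp
  show "x - y \<in> {x \<in> L. \<tau> x \<in> K}" using xy' sf_diff[OF L] sf_diff[OF K] hom_diff[OF L h] by simp
  show "x * y \<in> {x \<in> L. \<tau> x \<in> K}" using xy' sf_mult[OF L] sf_mult[OF K] hom_mult[OF L h] by simp
next
  fix x assume x: "x \<in> {x \<in> L. \<tau> x \<in> K}"
  then show "inverse x \<in> {x \<in> L. \<tau> x \<in> K}"
    using sf_inverse[OF L] sf_inverse[OF K] hom_inverse[OF L h] by simp
qed

context
  fixes k d :: nat and H :: real and \<alpha> :: complex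
  assumes kd: "0 < k" "k < d" and Halg: "algebraic (complex_of_real H)" and H1: "H \<ge> 1"
    and A: "\<alpha> \<in> A_set k d H"
begin

abbreviation "\<gamma> \<equiv> complex_of_real (H ^ d)"
abbreviation "KK \<equiv> normal_closure \<gamma>"

lemma alg': "algebraic \<alpha>" using alg[OF kd Halg H1 A] .

lemma galg: "algebraic \<gamma>"
  unfolding of_real_power by (rule algebraic_power[OF Halg])

lemma KK: "is_subfield KK" unfolding normal_closure_def by (rule gen_field_subfield)
lemma BK: "conjugates \<gamma> \<subseteq> KK" unfolding normal_closure_def by (rule gen_field_sup)
lemma gK: "\<gamma> \<in> KK" using alpha_conj[OF galg] BK by auto
lemma fB: "finite (conjugates \<gamma>)" by (rule conj_finite[OF galg])
lemma aB: "\<forall>x\<in>conjugates \<gamma>. algebraic x" using conj_algebraic[OF galg] by auto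
lemma fC: "finite (conjugates \<alpha>)" by (rule conj_finite[OF alg'])
lemma aC: "\<forall>x\<in>conjugates \<alpha>. algebraic x" using conj_algebraic[OF alg'] by auto

lemma deg_le:
  assumes z1: "z1 \<in> conjugates \<alpha>" and z2: "z2 \<in> conjugates \<alpha>"
  shows "degree_over KK z2 \<le> degree_over KK z1"
proof -
  let ?B = "conjugates \<gamma>"
  have b: "poly (map_poly id (minpoly \<rat> z1)) z2 = 0"
    using conj_minpoly_eq[OF alg' z1] conj_minpoly[OF alg'] z2 by simp
  obtain \<tau>1 where t1: "hom_on (gen_field (insert z1 \<rat>)) \<tau>1" "\<tau>1 z1 = z2"
    using ext1'[OF subfield_Rats conj_algebraic[OF alg' z1] hom_on_id b] by blast
  let ?E = "gen_field (insert z1 \<rat>)"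
  obtain \<tau> where t: "hom_on (gen_field (?E \<union> ?B)) \<tau>" "\<forall>x\<in>?E. \<tau> x = \<tau>1 x"
    using ext_set[OF fB gen_field_subfield t1(1) aB] by blast
  let ?L = "gen_field (?E \<union> ?B)"
  have L: "is_subfield ?L" by (rule gen_field_subfield)
  have EL: "?E \<subseteq> ?L" and BL: "?B \<subseteq> ?L" using gen_field_sup[of "?E \<union> ?B"] by auto
  have z1E: "z1 \<in> ?E" using gen_field_sup[of "insert z1 \<rat>"] by auto
  have tz: "\<tau> z1 = z2" using t(2) z1E t1(2) by simp
  have KL: "KK \<subseteq> ?L" unfolding normal_closure_def by (rule gen_field_least[OF L BL])
  define K' where "K' = {x \<in> ?L. \<tau> x \<in> KK}"
  have K'sf: "is_subfield K'" unfolding K'_def by (rule preimage_subfield[OF L t(1) KK])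
  have BK': "?B \<subseteq> K'"
  proof
    fix \<beta> assume b: "\<beta> \<in> ?B"
    have "\<tau> \<beta> \<in> ?B" by (rule hom_conj[OF galg L t(1)]) (use b BL in auto)
    then show "\<beta> \<in> K'" using b BL BK by (auto simp: K'_def)
  qed
  have KK': "KK \<subseteq> K'" unfolding normal_closure_def by (rule gen_field_least[OF K'sf BK'])
  have al1: "alg_over KK z1" by (rule algebraic_alg_over[OF conj_algebraic[OF alg' z1] KK])
  let ?m = "minpoly KK z1"
  have Fm: "Fpoly KK ?m" by (rule minpoly_props(2)[OF KK al1])
  have FmL: "Fpoly ?L ?m" using Fpoly_mono[OF KL Fm] .
  define q where "q = map_poly \<tau> ?m"
  have Fq: "Fpoly KK q" unfolding Fpoly_def q_def
  proof
    fix i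
    have "coeff ?m i \<in> K'" using Fm KK' by (auto simp: Fpoly_def)
    then show "coeff (map_poly \<tau> ?m) i \<in> KK" by (simp add: coeff_map_hom[OF L t(1)] K'_def)
  qed
  have dq: "degree q = degree_over KK z1"
    unfolding q_def using degree_map_hom[OF L t(1) FmL] minpoly_props(4)[OF KK al1] by simp
  have q0: "q \<noteq> 0" using dq degree_over_pos[OF KK al1] by auto
  have z1L: "z1 \<in> ?L" using z1E EL by auto
  have "\<tau> (poly ?m z1) = poly q (\<tau> z1)" unfolding q_def by (rule hom_poly[OF L t(1) FmL z1L])
  then have "poly q z2 = 0" using minpoly_props(3)[OF KK al1] hom_0[OF L t(1)] tz by simp
  from degree_over_le[OF q0 Fq this] show ?thesis using dq by simp
qed

lemma deg_eq: "z \<in> conjugates \<alpha> \<Longrightarrow> degree_over KK z = degree_over KK \<alpha>"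
  using deg_le[of z \<alpha>] deg_le[of \<alpha> z] alpha_conj[OF alg'] by fastforce

lemma coeffs_in_K:
  assumes S: "S \<subseteq> conjugates \<alpha>"
    and st: "\<And>L \<tau>. is_subfield L \<Longrightarrow> hom_on L \<tau> \<Longrightarrow> conjugates \<alpha> \<subseteq> L \<Longrightarrow> \<tau> \<gamma> = \<gamma> \<Longrightarrow> \<tau> ` S = S"
  shows "Fpoly KK (\<Prod>z\<in>S. [:-z, 1:])"
  unfolding Fpoly_def
proof
  fix i
  let ?f = "\<Prod>z\<in>S. [:-z, 1:]"
  let ?C = "conjugates \<alpha>"
  let ?A = "{x. algebraic x}"
  define c where "c = coeff ?f i"
  have FA: "Fpoly ?A ?f"
    by (rule Fpoly_prod[OF subfield_algebraic], rule Fpoly_lin[OF subfield_algebraic]) (use S aC in auto)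
  have calg: "algebraic c" using FA by (simp add: Fpoly_def c_def)
  have alc: "alg_over KK c" by (rule algebraic_alg_over[OF calg KK])
  have "c \<in> KK"
  proof (rule descent[OF KK alc])
    fix y assume y: "poly (minpoly KK c) y = 0"
    then have y': "poly (map_poly id (minpoly KK c)) y = 0" by simp
    obtain \<tau>1 where t1: "hom_on (gen_field (insert c KK)) \<tau>1" "\<forall>x\<in>KK. \<tau>1 x = id x" "\<tau>1 c = y"
      using ext1'[OF KK calg hom_on_id y'] by blast
    let ?E = "gen_field (insert c KK)"
    obtain \<tau> where t: "hom_on (gen_field (?E \<union> ?C)) \<tau>" "\<forall>x\<in>?E. \<tau> x = \<tau>1 x"
      using ext_set[OF fC gen_field_subfield t1(1) aC] by blast
    let ?L = "gen_field (?E \<union> ?C)"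
    have L: "is_subfield ?L" by (rule gen_field_subfield)
    have EL: "?E \<subseteq> ?L" and CL: "?C \<subseteq> ?L" using gen_field_sup[of "?E \<union> ?C"] by auto
    have KE: "KK \<subseteq> ?E" and cE: "c \<in> ?E" using gen_field_sup[of "insert c KK"] by auto
    have tg: "\<tau> \<gamma> = \<gamma>" using t(2) t1(2) gK KE by auto
    have tS: "\<tau> ` S = S" by (rule st[OF L t(1) CL tg])
    have injS: "inj_on \<tau> S" using hom_inj[OF L t(1)] S CL by (meson inj_on_subset order_trans)
    have SL: "\<And>z. z \<in> S \<Longrightarrow> z \<in> ?L" using S CL by auto
    have "map_poly \<tau> ?f = (\<Prod>z\<in>S. map_poly \<tau> [:-z, 1:])"
      by (rule map_hom_prod[OF L t(1)]) (rule Fpoly_lin[OF L SL])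
    also have "\<dots> = (\<Prod>z\<in>S. [:- \<tau> z, 1:])"
      by (rule prod.cong) (simp_all add: map_lin_hom[OF L t(1) SL])
    also have "\<dots> = (\<Prod>z\<in>\<tau> ` S. [:- z, 1:])" by (simp add: prod.reindex[OF injS])
    also have "\<dots> = ?f" using tS by simp
    finally have "map_poly \<tau> ?f = ?f" .
    then have "\<tau> c = c" unfolding c_def using coeff_map_hom[OF L t(1), of ?f i] by simp
    moreover have "\<tau> c = y" using t(2) cE t1(3) by simp
    ultimately show "y = c" by simp
  qed
  then show "coeff ?f i \<in> KK" by (simp add: c_def)
qed

lemma part1: "degree_over KK \<alpha> dvd gcd k d"
proof -
  define m where "m = degree_over KK \<alpha>"
  have alK: "alg_over KK z" if "algebraic z" for z by (rule algebraic_alg_over[OF that KK])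
  have m1: "m \<ge> 1" unfolding m_def by (rule degree_over_pos[OF KK alK[OF alg']])
  have cnt: "m dvd card S" if S: "S \<subseteq> conjugates \<alpha>"
    and st: "\<And>L \<tau>. is_subfield L \<Longrightarrow> hom_on L \<tau> \<Longrightarrow> conjugates \<alpha> \<subseteq> L \<Longrightarrow> \<tau> \<gamma> = \<gamma> \<Longrightarrow> \<tau> ` S = S"
    for S
  proof -
    have fS: "finite S" using S fC by (rule finite_subset)
    have "m dvd degree (\<Prod>z\<in>S. [:-z, 1:])"
    proof (rule count_dvd[OF KK m1 coeffs_in_K[OF S st]])
      show "lead_coeff (\<Prod>z\<in>S. [:-z, 1:]) = 1" by (rule prod_lin_props(1)[OF fS])
    next
      fix z assume "poly (\<Prod>z\<in>S. [:-z, 1:]) z = 0"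
      then have "z \<in> S" using prod_lin_props(3)[OF fS] by simp
      then have zC: "z \<in> conjugates \<alpha>" using S by auto
      then show "alg_over KK z \<and> degree_over KK z = m"
        using alK aC deg_eq m_def by auto
    qed auto
    then show ?thesis using prod_lin_props(2)[OF fS] by simp
  qed
  have "m dvd card (Lg \<alpha>)"
  proof (rule cnt)
    show "Lg \<alpha> \<subseteq> conjugates \<alpha>" by (auto simp: Lg_def)
  next
    fix L \<tau> assume "is_subfield L" "hom_on L \<tau>" "conjugates \<alpha> \<subseteq> L" "\<tau> \<gamma> = \<gamma>"
    then show "\<tau> ` Lg \<alpha> = Lg \<alpha>" by (rule stab(1)[OF kd Halg H1 A])
  qed
  moreover have "m dvd card (Sm \<alpha>)"
  proof (rule cnt)
    show "Sm \<alpha> \<subseteq> conjugates \<alpha>" by (auto simp: Sm_def)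
  next
    fix L \<tau> assume "is_subfield L" "hom_on L \<tau>" "conjugates \<alpha> \<subseteq> L" "\<tau> \<gamma> = \<gamma>"
    then show "\<tau> ` Sm \<alpha> = Sm \<alpha>" by (rule stab(3)[OF kd Halg H1 A])
  qed
  moreover have "card (Lg \<alpha>) + card (Sm \<alpha>) = d"
  proof -
    have "conjugates \<alpha> = Lg \<alpha> \<union> Sm \<alpha>" "Lg \<alpha> \<inter> Sm \<alpha> = {}" by (auto simp: Lg_def Sm_def)
    moreover have "finite (Lg \<alpha>)" "finite (Sm \<alpha>)" using fC by (auto simp: Lg_def Sm_def)
    ultimately have "card (conjugates \<alpha>) = card (Lg \<alpha>) + card (Sm \<alpha>)" by (simp add: card_Un_disjoint)
    then show ?thesis using card_conj[OF alg'] dal[OF kd Halg H1 A] by simp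
  qed
  ultimately have "m dvd k" "m dvd d" using kSm[OF kd Halg H1 A] by (auto simp: dvd_add)
  then show ?thesis unfolding m_def by simp
qed

lemma part2:
  assumes g: "gal_Qbar \<sigma>" and sg: "\<sigma> \<gamma> = \<gamma>"
  shows "\<sigma> ` {z \<in> conjugates \<alpha>. cmod z \<ge> 1} = {z \<in> conjugates \<alpha>. cmod z \<ge> 1}"
proof -
  let ?A = "{x. algebraic x}"
  have Asf: "is_subfield ?A" by (rule subfield_algebraic)
  have bij: "bij_betw \<sigma> ?A ?A"
    and hm: "\<forall>x y. algebraic x \<longrightarrow> algebraic y \<longrightarrow> \<sigma> (x + y) = \<sigma> x + \<sigma> y \<and> \<sigma> (x * y) = \<sigma> x * \<sigma> y"
    using g by (auto simp: gal_Qbar_def)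
  have "1 \<in> \<sigma> ` ?A" using bij by (simp add: bij_betw_def)
  then obtain x where x: "algebraic x" "\<sigma> x = 1" by auto
  have "\<sigma> (1 * x) = \<sigma> 1 * \<sigma> x" using hm x(1) algebraic_1 by blast
  then have "1 = \<sigma> 1 * 1" using x(2) by simp
  then have s1: "\<sigma> 1 = 1" by simp
  have h: "hom_on ?A \<sigma>" unfolding hom_on_def using s1 hm by auto
  have CA: "conjugates \<alpha> \<subseteq> ?A" using aC by auto
  show ?thesis using stab(1)[OF kd Halg H1 A Asf h CA sg] unfolding Lg_def by simp
qed

end

theorem lemma5p1:
  fixes k d :: nat and H :: real and \<alpha> :: complex
  assumes "0 < k" "k < d"
    and "algebraic (complex_of_real H)" "H \<ge> 1"
    and "\<alpha> \<in> A_set k d H"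
  shows "degree_over (normal_closure (complex_of_real (H ^ d))) \<alpha> dvd gcd k d
    \<and> (\<forall>\<sigma>. gal_Qbar \<sigma> \<and> \<sigma> (complex_of_real (H ^ d)) = complex_of_real (H ^ d) \<longrightarrow>
         \<sigma> ` {z \<in> conjugates \<alpha>. cmod z \<ge> 1} = {z \<in> conjugates \<alpha>. cmod z \<ge> 1})"
  using part1[OF assms] part2[OF assms] by blast


end
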